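(* Consider a mean-variance team stochastic game as described in the context, and let $\tilde{\boldsymbol{\mu}}$ and the sets $\mathcal{D}_1^{\tilde{\boldsymbol{\mu}}},\dots,\mathcal{D}_N^{\tilde{\boldsymbol{\mu}}}$ be the output of Algorithm Modified MV-MAPI (described in the context). Let $\mathcal{D}^{\tilde{\boldsymbol{\mu}}}=\{(\mu_i,\tilde{\boldsymbol{\mu}}_{-i}):i\in\mathcal{N},\ \mu_i\in\mathcal{D}_i^{\tilde{\boldsymbol{\mu}}}\}$ and $\widetilde{\mathcal{D}}=\mathcal{D}\setminus\mathcal{D}^{\tilde{\boldsymbol{\mu}}}$. Then: (1) $J(\tilde{\boldsymbol{\mu}})=J(\boldsymbol{\mu})$ for all $\boldsymbol{\mu}\in\mathcal{D}^{\tilde{\boldsymbol{\mu}}}$, and $\widetilde{\mathcal{D}}$ is a valid pruned joint policy space, i.e. $\widetilde{\mathcal{D}}$ contains a joint policy $\boldsymbol{\mu}^*$ with $J(\boldsymbol{\mu}^* )=\max_{\boldsymbol{\mu}\in\mathcal{U}}J(\boldsymbol{\mu})$. (2) $\tilde{\boldsymbol{\mu}}$ is a strict local Nash equilibrium in the mixed joint policy space induced by $\widetilde{\mathcal{D}}$: there exists $\bar\delta\in(0,1]$ such that for all $\delta\in(0,\bar\delta]$, every agent $i\in\mathcal{N}$ and every deterministic policy $\mu_i\neq\tilde\mu_i$ of agent $i$ with $(\mu_i,\tilde{\boldsymbol{\mu}}_{-i})\in\widetilde{\mathcal{D}}$, we have $J(\tilde{\boldsymbol{\mu}})>J((1-\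delta)\tilde\mu_i+\delta\mu_i,\tilde{\boldsymbol{\mu}}_{-i})$.
   Context: Game: finite agents $\mathcal{N}=\{1,\dots,N\}$, finite state space $\mathcal{S}$, finite action sets $\mathcal{A}_i$, $\mathcal{A}=\prod_i\mathcal{A}_i$, transition kernel $P(s'|s,\boldsymbol{a})$, common reward $r:\mathcal{S}\times\mathcal{A}\to\mathbb{R}$. Policies $\mu_i:\mathcal{S}\to\Delta(\mathcal{A}_i)$ (set $\mathcal{U}_i$; deterministic policies are maps $\mathcal{S}\to\mathcal{A}_i$); joint policies $\boldsymbol{\mu}\in\mathcal{U}=\prod_i\mathcal{U}_i$ with $\boldsymbol{\mu}(\boldsymbol{a}|s)=\prod_i\mu_i(a_i|s)$; $\mathcal{D}$ is the set of deterministic joint policies; $(\mu_i,\boldsymbol{\mu}_{-i})$ means agent $i$ uses $\mu_i$, others use $\boldsymbol{\mu}_{-i}$; $(1-\delta)\tilde\mu_i+\delta\mu_i$ is the policy $s\mapsto(1-\delta)\tilde\mu_i(\cdot|s)+\delta\mu_i(\cdot|s)$. Standing assumption: the chain $P^{\boldsymbol{\mu}}(s'|s)=\sum_{\boldsymbol{a}}\boldsymbol{\mu}(\boldsymbol{a}|s)P(s'|s,\boldsymbol{a})$ is ergodic for every $\boldsymbol{\mu}\in\mathcal{U}$, stationary distribution $\pi^{\boldsymbol{\mu}}$. $\eta(\boldsymbol{\mu})=\sum_s\pi^{\boldsymbol{\mu}}(s)\sum_{\boldsymbol{a}}\boldsymbol{\mu}(\boldsymbol{a}|s)r(s,\boldsymbol{a})$;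 $\zeta(\boldsymbol{\mu})=\sum_s\pi^{\boldsymbol{\mu}}(s)\sum_{\boldsymbol{a}}\boldsymbol{\mu}(\boldsymbol{a}|s)(r(s,\boldsymbol{a})-\eta(\boldsymbol{\mu}))^2$; for fixed $\beta\ge0$, $J(\boldsymbol{\mu})=\eta(\boldsymbol{\mu})-\beta\zeta(\boldsymbol{\mu})$. $f^{\boldsymbol{\mu}}(s,\boldsymbol{a})=r(s,\boldsymbol{a})-\beta(r(s,\boldsymbol{a})-\eta(\boldsymbol{\mu}))^2$, $f^{\boldsymbol{\mu}}(s)=\sum_{\boldsymbol{a}}\boldsymbol{\mu}(\boldsymbol{a}|s)f^{\boldsymbol{\mu}}(s,\boldsymbol{a})$; $V_f^{\boldsymbol{\mu}}$ solves $V(s)=f^{\boldsymbol{\mu}}(s)-J(\boldsymbol{\mu})+\sum_{s'}P^{\boldsymbol{\mu}}(s'|s)V(s')$ (unique up to an additive constant); $Q_f^{\boldsymbol{\mu}}(s,\boldsymbol{a})=f^{\boldsymbol{\mu}}(s,\boldsymbol{a})-J(\boldsymbol{\mu})+\sum_{s'}P(s'|s,\boldsymbol{a})V_f^{\boldsymbol{\mu}}(s')$, $A_f^{\boldsymbol{\mu}}=Q_f^{\boldsymbol{\mu}}-V_f^{\boldsymbol{\mu}}$. Algorithm MV-MAPI (from a deterministic initial joint policy $\boldsymbol{\mu}^{(0)}$): for $k=0,1,\dots$: set $\hat{\boldsymbol{\mu}}^{(k,0)}=\boldsymbol{\mu}^{(k)}$, draw a random permutation $i_1,\dots,i_N$;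 for $h=1,\dots,N$, for every $s$ set $\mu^{(k+1)}_{i_h}(s)$ to an action maximizing $\mathbb{E}_{\boldsymbol{a}_{-i_h}\sim\hat{\boldsymbol{\mu}}^{(k,h-1)}_{-i_h}(\cdot|s)}[A_f^{\hat{\boldsymbol{\mu}}^{(k,h-1)}}(s,a_{i_h},\boldsymbol{a}_{-i_h})]$ (keeping $\mu^{(k)}_{i_h}(s)$ if it attains the maximum) and set $\hat{\boldsymbol{\mu}}^{(k,h)}=(\mu^{(k+1)}_{i_1},\dots,\mu^{(k+1)}_{i_h},\mu^{(k)}_{i_{h+1}},\dots,\mu^{(k)}_{i_N})$; if $\mu^{(k+1)}_i=\mu^{(k)}_i$ for all $i$, return $\boldsymbol{\mu}^{(k)}$, else set $\boldsymbol{\mu}^{(k+1)}=\hat{\boldsymbol{\mu}}^{(k,N)}$. Algorithm Modified MV-MAPI: (Step 1) run MV-MAPI and obtain $\tilde{\boldsymbol{\mu}}$. For each $i=1,\dots,N$: let $\mathcal{D}_i^{\tilde{\boldsymbol{\mu}}}$ be the set of deterministic policies $\mu_i\neq\tilde\mu_i$ of agent $i$ such that for every $s$, $\mu_i(s)\in\arg\max_{a_i}\mathbb{E}_{\boldsymbol{a}_{-i}\sim\tilde{\boldsymbol{\mu}}_{-i}(\cdot|s)}[A_f^{\tilde{\boldsymbol{\mu}}}(s,a_i,\boldsymbol{a}_{-i})]$; if some $\mu_i\in\mathcal{D}_i^{\tilde{\boldsymbol{\mu}}}$ satisfies $\eta(\mu_i,\tilde{\boldsymbol{\mu}}_{-i})\neq\eta(\tilde{\boldsymbol{\mu}})$,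 go back to Step 1 running MV-MAPI from the initial joint policy $(\mu_i,\tilde{\boldsymbol{\mu}}_{-i})$. When the loop over $i$ completes without restarting, output $\tilde{\boldsymbol{\mu}}$ and $\mathcal{D}_1^{\tilde{\boldsymbol{\mu}}},\dots,\mathcal{D}_N^{\tilde{\boldsymbol{\mu}}}$. *)

theory Defs
  imports Complex_Main "HOL-Library.FuncSet"
begin

text \<open>Agents: finite type 'i (with a linear order used
for the loop i = 1..N of Modified MV-MAPI); states: finite type 's; action set of agent i:
A i :: 'a set.
A (stochastic) policy of agent i is p :: 's => 'a => real with p s a the probability of a in s.\<close>

definition jacts :: "('i \<Rightarrow> 'a set) \<Rightarrow> ('i \<Rightarrow> 'a) set" where
  "jacts A = Pi\<^sub>E UNIV A"

definition jp :: "('i::finite \<Rightarrow> 's \<Rightarrow> 'a \<Rightarrow> real) \<Rightarrow> 's \<Rightarrow> ('i \<Rightarrow> 'a) \<Rightarrow> real" where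
  "jp mu s a = (\<Prod>i\<in>UNIV. mu i s (a i))"

definition is_policy :: "('i \<Rightarrow> 'a set) \<Rightarrow> 'i \<Rightarrow> ('s \<Rightarrow> 'a \<Rightarrow> real) \<Rightarrow> bool" where
  "is_policy A i p \<longleftrightarrow> (\<forall>s. (\<forall>b. 0 \<le> p s b) \<and> (\<forall>b. b \<notin> A i \<longrightarrow> p s b = 0)
                          \<and> sum (p s) (A i) = 1)"

definition policies :: "('i \<Rightarrow> 'a set) \<Rightarrow> ('i \<Rightarrow> 's \<Rightarrow> 'a \<Rightarrow> real) set" where
  "policies A = {mu. \<forall>i. is_policy A i (mu i)}"

definition det_policy :: "('i \<Rightarrow> 'a set) \<Rightarrow> 'i \<Rightarrow> ('s \<Rightarrow> 'a) \<Rightarrow> bool" where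
  "det_policy A i d \<longleftrightarrow> (\<forall>s. d s \<in> A i)"

definition det_joint :: "('i \<Rightarrow> 'a set) \<Rightarrow> ('i \<Rightarrow> 's \<Rightarrow> 'a) \<Rightarrow> bool" where
  "det_joint A d \<longleftrightarrow> (\<forall>i. det_policy A i (d i))"

definition detp :: "('s \<Rightarrow> 'a) \<Rightarrow> 's \<Rightarrow> 'a \<Rightarrow> real" where
  "detp d s b = (if b = d s then 1 else 0)"

definition djoint :: "('i \<Rightarrow> 's \<Rightarrow> 'a) \<Rightarrow> ('i \<Rightarrow> 's \<Rightarrow> 'a \<Rightarrow> real)" where
  "djoint d = (\<lambda>i. detp (d i))"

definition chain :: "('i::finite \<Rightarrow> 'a set) \<Rightarrow> ('s \<Rightarrow> ('i \<Rightarrow> 'a) \<Rightarrow> 's \<Rightarrow> real)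
    \<Rightarrow> ('i \<Rightarrow> 's \<Rightarrow> 'a \<Rightarrow> real) \<Rightarrow> 's \<Rightarrow> 's \<Rightarrow> real" where
  "chain A P mu s s' = (\<Sum>a\<in>jacts A. jp mu s a * P s a s')"

fun mpow :: "('s::finite \<Rightarrow> 's \<Rightarrow> real) \<Rightarrow> nat \<Rightarrow> 's \<Rightarrow> 's \<Rightarrow> real" where
  "mpow M 0 s s' = (if s = s' then 1 else 0)"
| "mpow M (Suc n) s s' = (\<Sum>t\<in>UNIV. mpow M n s t * M t s')"

text \<open>Ergodic (irreducible and aperiodic) finite chain: some power of the transition matrix
is entrywise positive.\<close>
definition ergodic :: "('s::finite \<Rightarrow> 's \<Rightarrow> real) \<Rightarrow> bool" where
  "ergodic M \<longleftrightarrow> (\<exists>n. \<forall>s s'. 0 < mpow M n s s')"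

definition stationary :: "('s::finite \<Rightarrow> 's \<Rightarrow> real) \<Rightarrow> ('s \<Rightarrow> real) \<Rightarrow> bool" where
  "stationary M q \<longleftrightarrow> (\<forall>s. 0 \<le> q s) \<and> sum q UNIV = 1
                       \<and> (\<forall>s'. q s' = (\<Sum>s\<in>UNIV. q s * M s s'))"

definition stat :: "('i::finite \<Rightarrow> 'a set) \<Rightarrow> ('s::finite \<Rightarrow> ('i \<Rightarrow> 'a) \<Rightarrow> 's \<Rightarrow> real)
    \<Rightarrow> ('i \<Rightarrow> 's \<Rightarrow> 'a \<Rightarrow> real) \<Rightarrow> 's \<Rightarrow> real" where
  "stat A P mu = (THE q. stationary (chain A P mu) q)"

definition eta :: "('i::finite \<Rightarrow> 'a set) \<Rightarrow> ('s::finite \<Rightarrow> ('i \<Rightarrow> 'a) \<Rightarrow> 's \<Rightarrow> real)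
    \<Rightarrow> ('s \<Rightarrow> ('i \<Rightarrow> 'a) \<Rightarrow> real) \<Rightarrow> ('i \<Rightarrow> 's \<Rightarrow> 'a \<Rightarrow> real) \<Rightarrow> real" where
  "eta A P r mu = (\<Sum>s\<in>UNIV. stat A P mu s * (\<Sum>a\<in>jacts A. jp mu s a * r s a))"

definition zeta :: "('i::finite \<Rightarrow> 'a set) \<Rightarrow> ('s::finite \<Rightarrow> ('i \<Rightarrow> 'a) \<Rightarrow> 's \<Rightarrow> real)
    \<Rightarrow> ('s \<Rightarrow> ('i \<Rightarrow> 'a) \<Rightarrow> real) \<Rightarrow> ('i \<Rightarrow> 's \<Rightarrow> 'a \<Rightarrow> real) \<Rightarrow> real" where
  "zeta A P r mu = (\<Sum>s\<in>UNIV. stat A P mu s *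
       (\<Sum>a\<in>jacts A. jp mu s a * (r s a - eta A P r mu)\<^sup>2))"

definition Jmv :: "('i::finite \<Rightarrow> 'a set) \<Rightarrow> ('s::finite \<Rightarrow> ('i \<Rightarrow> 'a) \<Rightarrow> 's \<Rightarrow> real)
    \<Rightarrow> ('s \<Rightarrow> ('i \<Rightarrow> 'a) \<Rightarrow> real) \<Rightarrow> real \<Rightarrow> ('i \<Rightarrow> 's \<Rightarrow> 'a \<Rightarrow> real) \<Rightarrow> real" where
  "Jmv A P r \<beta> mu = eta A P r mu - \<beta> * zeta A P r mu"

definition fsa :: "('i::finite \<Rightarrow> 'a set) \<Rightarrow> ('s::finite \<Rightarrow> ('i \<Rightarrow> 'a) \<Rightarrow> 's \<Rightarrow> real)
    \<Rightarrow> ('s \<Rightarrow> ('i \<Rightarrow> 'a) \<Rightarrow> real) \<Rightarrow> real \<Rightarrow> ('i \<Rightarrow> 's \<Rightarrow> 'a \<Rightarrow> real) \<Rightarrow> 's \<Rightarrow> ('i \<Rightarrow> 'a) \<Rightarrow> real" where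
  "fsa A P r \<beta> mu s a = r s a - \<beta> * (r s a - eta A P r mu)\<^sup>2"

definition fs :: "('i::finite \<Rightarrow> 'a set) \<Rightarrow> ('s::finite \<Rightarrow> ('i \<Rightarrow> 'a) \<Rightarrow> 's \<Rightarrow> real)
    \<Rightarrow> ('s \<Rightarrow> ('i \<Rightarrow> 'a) \<Rightarrow> real) \<Rightarrow> real \<Rightarrow> ('i \<Rightarrow> 's \<Rightarrow> 'a \<Rightarrow> real) \<Rightarrow> 's \<Rightarrow> real" where
  "fs A P r \<beta> mu s = (\<Sum>a\<in>jacts A. jp mu s a * fsa A P r \<beta> mu s a)"

text \<open>V_f: some solution of the Poisson equation (unique up to an additive constant;
the advantage A_f does not depend on the choice).\<close>
definition Vf :: "('i::finite \<Rightarrow> 'a set) \<Rightarrow> ('s::finite \<Rightarrow> ('i \<Rightarrow> 'a) \<Rightarrow> 's \<Rightarrow> real)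
    \<Rightarrow> ('s \<Rightarrow> ('i \<Rightarrow> 'a) \<Rightarrow> real) \<Rightarrow> real \<Rightarrow> ('i \<Rightarrow> 's \<Rightarrow> 'a \<Rightarrow> real) \<Rightarrow> 's \<Rightarrow> real" where
  "Vf A P r \<beta> mu = (SOME V. \<forall>s. V s = fs A P r \<beta> mu s - Jmv A P r \<beta> mu
                                     + (\<Sum>s'\<in>UNIV. chain A P mu s s' * V s'))"

definition Qf :: "('i::finite \<Rightarrow> 'a set) \<Rightarrow> ('s::finite \<Rightarrow> ('i \<Rightarrow> 'a) \<Rightarrow> 's \<Rightarrow> real)
    \<Rightarrow> ('s \<Rightarrow> ('i \<Rightarrow> 'a) \<Rightarrow> real) \<Rightarrow> real \<Rightarrow> ('i \<Rightarrow> 's \<Rightarrow> 'a \<Rightarrow> real) \<Rightarrow> 's \<Rightarrow> ('i \<Rightarrow> 'a) \<Rightarrow> real" where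
  "Qf A P r \<beta> mu s a = fsa A P r \<beta> mu s a - Jmv A P r \<beta> mu
                        + (\<Sum>s'\<in>UNIV. P s a s' * Vf A P r \<beta> mu s')"

definition Af :: "('i::finite \<Rightarrow> 'a set) \<Rightarrow> ('s::finite \<Rightarrow> ('i \<Rightarrow> 'a) \<Rightarrow> 's \<Rightarrow> real)
    \<Rightarrow> ('s \<Rightarrow> ('i \<Rightarrow> 'a) \<Rightarrow> real) \<Rightarrow> real \<Rightarrow> ('i \<Rightarrow> 's \<Rightarrow> 'a \<Rightarrow> real) \<Rightarrow> 's \<Rightarrow> ('i \<Rightarrow> 'a) \<Rightarrow> real" where
  "Af A P r \<beta> mu s a = Qf A P r \<beta> mu s a - Vf A P r \<beta> mu s"

definition expA :: "('i::finite \<Rightarrow> 'a set) \<Rightarrow> ('s::finite \<Rightarrow> ('i \<Rightarrow> 'a) \<Rightarrow> 's \<Rightarrow> real)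
    \<Rightarrow> ('s \<Rightarrow> ('i \<Rightarrow> 'a) \<Rightarrow> real) \<Rightarrow> real \<Rightarrow> ('i \<Rightarrow> 's \<Rightarrow> 'a \<Rightarrow> real) \<Rightarrow> 'i \<Rightarrow> 's \<Rightarrow> 'a \<Rightarrow> real" where
  "expA A P r \<beta> mu i s b =
     (\<Sum>a\<in>{a\<in>jacts A. a i = b}. (\<Prod>j\<in>UNIV - {i}. mu j s (a j)) * Af A P r \<beta> mu s a)"

definition argmaxA :: "('i::finite \<Rightarrow> 'a set) \<Rightarrow> ('s::finite \<Rightarrow> ('i \<Rightarrow> 'a) \<Rightarrow> 's \<Rightarrow> real)
    \<Rightarrow> ('s \<Rightarrow> ('i \<Rightarrow> 'a) \<Rightarrow> real) \<Rightarrow> real \<Rightarrow> ('i \<Rightarrow> 's \<Rightarrow> 'a \<Rightarrow> real) \<Rightarrow> 'i \<Rightarrow> 's \<Rightarrow> 'a set" where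
  "argmaxA A P r \<beta> mu i s =
     {b\<in>A i. \<forall>b'\<in>A i. expA A P r \<beta> mu i s b' \<le> expA A P r \<beta> mu i s b}"

text \<open>One sweep of MV-MAPI over the agents in the order given by a list (the permutation).
The current joint policy is the intermediate policy \<open>\<mu>^(k,h-1)\<close>; the agent being updated still
uses its old policy, which is kept wherever it attains the maximum.\<close>
inductive sweep :: "('i::finite \<Rightarrow> 'a set) \<Rightarrow> ('s::finite \<Rightarrow> ('i \<Rightarrow> 'a) \<Rightarrow> 's \<Rightarrow> real)
    \<Rightarrow> ('s \<Rightarrow> ('i \<Rightarrow> 'a) \<Rightarrow> real) \<Rightarrow> real
    \<Rightarrow> ('i \<Rightarrow> 's \<Rightarrow> 'a) \<Rightarrow> 'i list \<Rightarrow> ('i \<Rightarrow> 's \<Rightarrow> 'a) \<Rightarrow> bool"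
  for A P r \<beta> where
  sweep_Nil: "sweep A P r \<beta> d [] d"
| sweep_Cons: "\<lbrakk> \<forall>s. e s \<in> argmaxA A P r \<beta> (djoint d) i s
                   \<and> (d i s \<in> argmaxA A P r \<beta> (djoint d) i s \<longrightarrow> e s = d i s);
                 sweep A P r \<beta> (d(i := e)) is d' \<rbrakk>
               \<Longrightarrow> sweep A P r \<beta> d (i # is) d'"

text \<open>mvmapi A P r \<beta> d0 d: some execution of MV-MAPI from d0 (with some choice of random
permutations) terminates and returns d.\<close>
inductive mvmapi :: "('i::finite \<Rightarrow> 'a set) \<Rightarrow> ('s::finite \<Rightarrow> ('i \<Rightarrow> 'a) \<Rightarrow> 's \<Rightarrow> real)
    \<Rightarrow> ('s \<Rightarrow> ('i \<Rightarrow> 'a) \<Rightarrow> real) \<Rightarrow> real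
    \<Rightarrow> ('i \<Rightarrow> 's \<Rightarrow> 'a) \<Rightarrow> ('i \<Rightarrow> 's \<Rightarrow> 'a) \<Rightarrow> bool"
  for A P r \<beta> where
  mvmapi_stop: "\<lbrakk> distinct ps; set ps = UNIV; sweep A P r \<beta> d ps d \<rbrakk> \<Longrightarrow> mvmapi A P r \<beta> d d"
| mvmapi_step: "\<lbrakk> distinct ps; set ps = UNIV; sweep A P r \<beta> d ps d'; d' \<noteq> d;
                  mvmapi A P r \<beta> d' out \<rbrakk> \<Longrightarrow> mvmapi A P r \<beta> d out"

definition Dset :: "('i::finite \<Rightarrow> 'a set) \<Rightarrow> ('s::finite \<Rightarrow> ('i \<Rightarrow> 'a) \<Rightarrow> 's \<Rightarrow> real)
    \<Rightarrow> ('s \<Rightarrow> ('i \<Rightarrow> 'a) \<Rightarrow> real) \<Rightarrow> real \<Rightarrow> ('i \<Rightarrow> 's \<Rightarrow> 'a) \<Rightarrow> 'i \<Rightarrow> ('s \<Rightarrow> 'a) set" where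
  "Dset A P r \<beta> dt i = {e. det_policy A i e \<and> e \<noteq> dt i
                            \<and> (\<forall>s. e s \<in> argmaxA A P r \<beta> (djoint dt) i s)}"

text \<open>modified A P r \<beta> d0 out: some execution of Modified MV-MAPI started from the
deterministic joint policy d0 terminates with output out. The loop over agents follows
the linear order on 'i.\<close>
inductive modified :: "('i::{finite,linorder} \<Rightarrow> 'a set) \<Rightarrow> ('s::finite \<Rightarrow> ('i \<Rightarrow> 'a) \<Rightarrow> 's \<Rightarrow> real)
    \<Rightarrow> ('s \<Rightarrow> ('i \<Rightarrow> 'a) \<Rightarrow> real) \<Rightarrow> real
    \<Rightarrow> ('i \<Rightarrow> 's \<Rightarrow> 'a) \<Rightarrow> ('i \<Rightarrow> 's \<Rightarrow> 'a) \<Rightarrow> bool"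
  for A P r \<beta> where
  modified_done: "\<lbrakk> mvmapi A P r \<beta> d0 dt;
                    \<forall>i. \<forall>e\<in>Dset A P r \<beta> dt i.
                        eta A P r (djoint (dt(i := e))) = eta A P r (djoint dt) \<rbrakk>
                  \<Longrightarrow> modified A P r \<beta> d0 dt"
| modified_restart: "\<lbrakk> mvmapi A P r \<beta> d0 dt;
                    \<forall>j<i. \<forall>e\<in>Dset A P r \<beta> dt j.
                        eta A P r (djoint (dt(j := e))) = eta A P r (djoint dt);
                    e \<in> Dset A P r \<beta> dt i;
                    eta A P r (djoint (dt(i := e))) \<noteq> eta A P r (djoint dt);
                    modified A P r \<beta> (dt(i := e)) out \<rbrakk>
                  \<Longrightarrow> modified A P r \<beta> d0 out"

definition Dmu :: "('i::finite \<Rightarrow> 'a set) \<Rightarrow> ('s::finite \<Rightarrow> ('i \<Rightarrow> 'a) \<Rightarrow> 's \<Rightarrow> real)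
    \<Rightarrow> ('s \<Rightarrow> ('i \<Rightarrow> 'a) \<Rightarrow> real) \<Rightarrow> real \<Rightarrow> ('i \<Rightarrow> 's \<Rightarrow> 'a) \<Rightarrow> ('i \<Rightarrow> 's \<Rightarrow> 'a) set" where
  "Dmu A P r \<beta> dt = {dt(i := e) | i e. e \<in> Dset A P r \<beta> dt i}"

definition Dtilde :: "('i::finite \<Rightarrow> 'a set) \<Rightarrow> ('s::finite \<Rightarrow> ('i \<Rightarrow> 'a) \<Rightarrow> 's \<Rightarrow> real)
    \<Rightarrow> ('s \<Rightarrow> ('i \<Rightarrow> 'a) \<Rightarrow> real) \<Rightarrow> real \<Rightarrow> ('i \<Rightarrow> 's \<Rightarrow> 'a) \<Rightarrow> ('i \<Rightarrow> 's \<Rightarrow> 'a) set" where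
  "Dtilde A P r \<beta> dt = {d. det_joint A d} - Dmu A P r \<beta> dt"

end

theory Submission
  imports Defs "HOL-Analysis.Analysis"
begin


lemma rank_nullity_sq:
  fixes A :: "real^'n^'n"
  shows "dim {x. A *v x = 0} + rank A = CARD('n)"
proof -
  let ?R = "span (rows A)"
  have eq: "{y \<in> UNIV. \<forall>x \<in> ?R. orthogonal x y} = {x. A *v x = 0}"
  proof (intro set_eqI iffI)
    fix y assume "y \<in> {y \<in> UNIV. \<forall>x \<in> ?R. orthogonal x y}"
    then have "\<forall>x\<in>rows A. orthogonal x y" by (auto intro: span_base)
    then have "\<forall>i. inner (A$i) y = 0"
      by (auto simp: rows_def orthogonal_def row_def vec_lambda_eta)
    then show "y \<in> {x. A *v x = 0}" by (simp add: vec_eq_iff matrix_vector_mul_component)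
  next
    fix y assume "y \<in> {x. A *v x = 0}"
    then have "\<forall>i. inner (A$i) y = 0" by (simp add: vec_eq_iff matrix_vector_mul_component)
    then have h: "\<And>x. x\<in>rows A \<Longrightarrow> orthogonal y x"
      by (auto simp: rows_def orthogonal_def row_def vec_lambda_eta inner_commute)
    have "\<forall>x \<in> ?R. orthogonal x y"
      using orthogonal_to_span[OF _ h] by (simp add: orthogonal_commute)
    then show "y \<in> {y \<in> UNIV. \<forall>x \<in> ?R. orthogonal x y}" by simp
  qed
  have "dim {y \<in> UNIV. \<forall>x \<in> ?R. orthogonal x y} + dim ?R = dim (UNIV :: (real^'n) set)"
    by (rule dim_subspace_orthogonal_to_vectors) auto
  then show ?thesis using eq by (simp add: row_rank_def)
qed


definition stoch :: "('s::finite \<Rightarrow> 's \<Rightarrow> real) \<Rightarrow> bool" where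
  "stoch M \<longleftrightarrow> (\<forall>s t. 0 \<le> M s t) \<and> (\<forall>s. (\<Sum>t\<in>UNIV. M s t) = 1)"

lemma mpow_nonneg: "stoch M \<Longrightarrow> 0 \<le> mpow M n s t"
  by (induction n arbitrary: t) (auto simp: stoch_def intro!: sum_nonneg)

lemma mpow_sum1: "stoch M \<Longrightarrow> (\<Sum>t\<in>UNIV. mpow M n s t) = 1"
proof (induction n)
  case 0 
  have "mpow M 0 s = (\<lambda>t. if s = t then 1 else 0)" by auto
  then show ?case by simp
next
  case (Suc n)
  have "(\<Sum>t\<in>UNIV. mpow M (Suc n) s t) = (\<Sum>t\<in>UNIV. \<Sum>u\<in>UNIV. mpow M n s u * M u t)"
    by simp
  also have "\<dots> = (\<Sum>u\<in>UNIV. \<Sum>t\<in>UNIV. mpow M n s u * M u t)" by (rule sum.swap)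
  also have "\<dots> = (\<Sum>u\<in>UNIV. mpow M n s u * (\<Sum>t\<in>UNIV. M u t))"
    by (simp add: sum_distrib_left)
  also have "\<dots> = 1" using Suc by (simp add: stoch_def)
  finally show ?case .
qed

lemma stationary_mpow:
  assumes "stationary M q" shows "q t = (\<Sum>s\<in>UNIV. q s * mpow M n s t)"
proof (induction n arbitrary: t)
  case 0 
  have "(\<Sum>s\<in>UNIV. q s * (if s = t then 1 else 0)) = (\<Sum>s\<in>UNIV. (if s = t then q s else 0))"
    by (intro sum.cong) auto
  then show ?case by simp
next
  case (Suc n)
  have st: "\<And>s'. q s' = (\<Sum>s\<in>UNIV. q s * M s s')" using assms unfolding stationary_def by blast
  have "(\<Sum>s\<in>UNIV. q s * mpow M (Suc n) s t) = (\<Sum>s\<in>UNIV. \<Sum>u\<in>UNIV. q s * mpow M n s u * M u t)"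
    by (simp only: mpow.simps sum_distrib_left mult.assoc)
  also have "\<dots> = (\<Sum>u\<in>UNIV. \<Sum>s\<in>UNIV. q s * mpow M n s u * M u t)" by (rule sum.swap)
  also have "\<dots> = (\<Sum>u\<in>UNIV. (\<Sum>s\<in>UNIV. q s * mpow M n s u) * M u t)"
    by (simp only: sum_distrib_right)
  also have "\<dots> = (\<Sum>u\<in>UNIV. q u * M u t)" by (simp only: Suc[symmetric])
  also have "\<dots> = q t" by (rule st[symmetric])
  finally show ?case by simp
qed
lemma harmonic_mpow:
  assumes "\<forall>s. x s = (\<Sum>t\<in>UNIV. M s t * x t)" shows "x s = (\<Sum>t\<in>UNIV. mpow M n s t * x t)"
proof (induction n arbitrary: s)
  case 0 
  have "(\<Sum>t\<in>UNIV. (if s = t then 1 else 0) * x t) = (\<Sum>t\<in>UNIV. (if s = t then x t else 0))"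
    by (intro sum.cong) auto
  then show ?case by simp
next
  case (Suc n)
  have "(\<Sum>t\<in>UNIV. mpow M (Suc n) s t * x t) = (\<Sum>t\<in>UNIV. \<Sum>u\<in>UNIV. mpow M n s u * M u t * x t)"
    by (simp only: mpow.simps sum_distrib_right)
  also have "\<dots> = (\<Sum>u\<in>UNIV. \<Sum>t\<in>UNIV. mpow M n s u * M u t * x t)" by (rule sum.swap)
  also have "\<dots> = (\<Sum>u\<in>UNIV. mpow M n s u * (\<Sum>t\<in>UNIV. M u t * x t))"
    by (simp only: sum_distrib_left mult.assoc)
  also have "\<dots> = (\<Sum>u\<in>UNIV. mpow M n s u * x u)" by (simp only: assms[rule_format, symmetric])
  finally show ?case by (simp only: Suc[symmetric])
qed

lemma harmonic_const:
  assumes st: "stoch M" and erg: "ergodic M" and h: "\<forall>s. x s = (\<Sum>t\<in>UNIV. M s t * x t)"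
  shows "x s = x t"
proof -
  obtain n where pos: "\<forall>s s'. 0 < mpow M n s s'" using erg by (auto simp: ergodic_def)
  have "Max (range x) \<in> range x" by (rule Max_in) auto
  then obtain m where mm: "Max (range x) = x m" by (rule rangeE)
  have m: "\<forall>u. x u \<le> x m"
  proof
    fix u show "x u \<le> x m" using Max_ge[of "range x" "x u"] mm by simp
  qed
  have "x m = (\<Sum>u\<in>UNIV. mpow M n m u * x u)" by (rule harmonic_mpow[OF h])
  then have "(\<Sum>u\<in>UNIV. mpow M n m u * (x m - x u)) = 0"
    using mpow_sum1[OF st, of n m] by (simp add: right_diff_distrib sum_subtractf sum_distrib_right[symmetric])
  moreover have "\<forall>u\<in>UNIV. 0 \<le> mpow M n m u * (x m - x u)" using pos m by (simp add: less_imp_le)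
  ultimately have prod0: "\<forall>u. mpow M n m u * (x m - x u) = 0"
    using sum_nonneg_eq_0_iff[of UNIV "\<lambda>u. mpow M n m u * (x m - x u)"] by simp
  have xu: "x u = x m" for u
  proof -
    have a: "mpow M n m u * (x m - x u) = 0" using prod0 by blast
    have "mpow M n m u \<noteq> 0" using pos[rule_format, of m u] by linarith
    then show ?thesis using a by simp
  qed
  show ?thesis using xu[of s] xu[of t] by simp
qed

lemma stat_pos:
  assumes st: "stoch M" and erg: "ergodic M" and q: "stationary M q"
  shows "0 < q s"
proof -
  obtain n where pos: "\<forall>s s'. 0 < mpow M n s s'" using erg by (auto simp: ergodic_def)
  have "\<exists>u. 0 < q u"
  proof (rule ccontr)
    assume "\<not> ?thesis" 
    then have "\<forall>u. q u \<le> 0" by (simp add: not_less)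
    then have "(\<Sum>u\<in>UNIV. q u) \<le> 0" by (simp add: sum_nonpos)
    then show False using q by (simp add: stationary_def)
  qed
  then obtain u where u: "0 < q u" by blast
  have "q s = (\<Sum>v\<in>UNIV. q v * mpow M n v s)" by (rule stationary_mpow[OF q])
  also have "\<dots> \<ge> q u * mpow M n u s"
  proof (rule member_le_sum)
    have "\<forall>v. 0 \<le> q v" using q unfolding stationary_def by blast
    then show "\<And>v. v \<in> UNIV - {u} \<Longrightarrow> 0 \<le> q v * mpow M n v s"
      using mpow_nonneg[OF st] by simp
  qed auto
  finally show ?thesis using mult_pos_pos[OF u pos[rule_format, of u s]] by linarith
qed


definition amat :: "('s::finite \<Rightarrow> 's \<Rightarrow> real) \<Rightarrow> real^'s^'s" where
  "amat M = (\<chi> s t. (if s = t then 1 else 0) - M s t)"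

lemma delta_sum_l:
  fixes f :: "'x::finite \<Rightarrow> real"
  shows "(\<Sum>t\<in>UNIV. (if s = t then 1 else 0) * f t) = f s"
proof -
  have "(\<Sum>t\<in>UNIV. (if s = t then 1 else 0) * f t) = (\<Sum>t\<in>UNIV. (if s = t then f t else 0))"
    by (intro sum.cong) auto
  then show ?thesis by simp
qed

lemma delta_sum_r:
  fixes f :: "'x::finite \<Rightarrow> real"
  shows "(\<Sum>s\<in>UNIV. f s * (if s = t then 1 else 0)) = f t"
proof -
  have "(\<Sum>s\<in>UNIV. f s * (if s = t then 1 else 0)) = (\<Sum>s\<in>UNIV. (if s = t then f s else 0))"
    by (intro sum.cong) auto
  then show ?thesis by simp
qed

lemma amat_mv: fixes M :: "'s::finite \<Rightarrow> 's \<Rightarrow> real" shows "(amat M *v x) $ s = x$s - (\<Sum>t\<in>UNIV. M s t * x$t)"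
proof -
  have "(amat M *v x) $ s = (\<Sum>t\<in>UNIV. ((if s = t then 1 else 0) - M s t) * x$t)"
    by (simp add: amat_def matrix_vector_mult_def)
  also have "\<dots> = (\<Sum>t\<in>UNIV. (if s = t then 1 else 0) * x$t) - (\<Sum>t\<in>UNIV. M s t * x$t)"
    by (simp only: left_diff_distrib sum_subtractf)
  finally show ?thesis by (simp only: delta_sum_l)
qed

lemma amat_tmv: fixes M :: "'s::finite \<Rightarrow> 's \<Rightarrow> real" shows "(transpose (amat M) *v y) $ t = y$t - (\<Sum>s\<in>UNIV. y$s * M s t)"
proof -
  have "(transpose (amat M) *v y) $ t = (\<Sum>s\<in>UNIV. y$s * ((if s = t then 1 else 0) - M s t))"
    by (simp add: amat_def matrix_vector_mult_def transpose_def mult.commute)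
  also have "\<dots> = (\<Sum>s\<in>UNIV. y$s * (if s = t then 1 else 0)) - (\<Sum>s\<in>UNIV. y$s * M s t)"
    by (simp only: right_diff_distrib sum_subtractf)
  finally show ?thesis by (simp only: delta_sum_r)
qed

lemma rank_amat:
  fixes M :: "'s::finite \<Rightarrow> 's \<Rightarrow> real"
  assumes st: "stoch M" and erg: "ergodic M"
  shows "rank (amat M) = CARD('s) - 1"
proof -
  let ?A = "amat M"
  have one: "?A *v vec 1 = 0"
    using st by (simp add: vec_eq_iff amat_mv stoch_def)
  have "vec 1 \<noteq> (0::real^'s)" by (simp add: vec_eq_iff)
  then have "\<exists>x. x \<noteq> 0 \<and> ?A *v x = 0" using one by blast
  then have "rank ?A \<noteq> CARD('s)" by (rule matrix_nonfull_linear_equations_eq[THEN iffD1])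
  then have le: "rank ?A < CARD('s)" using rank_bound[of ?A] by simp
  have sub: "{x. ?A *v x = 0} \<subseteq> span {vec 1 :: real^'s}"
  proof
    fix x :: "real^'s" assume "x \<in> {x. ?A *v x = 0}"
    then have x0: "?A *v x = 0" by simp
    have h: "\<forall>s. x$s = (\<Sum>t\<in>UNIV. M s t * x$t)"
    proof
      fix s
      have "(?A *v x)$s = 0" using x0 by simp
      then have "x$s - (\<Sum>t\<in>UNIV. M s t * x$t) = 0" by (simp only: amat_mv)
      then show "x$s = (\<Sum>t\<in>UNIV. M s t * x$t)" by linarith
    qed
    obtain a :: 's where True by blast
    have xa: "x$s = x$a" for s using harmonic_const[OF st erg h] by blast
    have "x = (x$a) *\<^sub>R vec 1"
      unfolding vec_eq_iff
    proof
      fix s show "x$s = ((x$a) *\<^sub>R vec 1)$s" using xa[of s] by simp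
    qed
    moreover have "(x$a) *\<^sub>R vec 1 \<in> span {vec 1 :: real^'s}"
      by (intro span_scale span_base) simp
    ultimately show "x \<in> span {vec 1}" by simp
  qed
  have "dim {x. ?A *v x = 0} \<le> card {vec 1 :: real^'s}"
    by (rule dim_le_card[OF sub]) simp
  then have "dim {x. ?A *v x = 0} \<le> 1" by simp
  then show ?thesis using rank_nullity_sq[of ?A] le by linarith
qed

lemma exists_stationary:
  fixes M :: "'s::finite \<Rightarrow> 's \<Rightarrow> real"
  assumes st: "stoch M" and erg: "ergodic M"
  shows "\<exists>q. stationary M q"
proof -
  let ?A = "amat M"
  have "rank (transpose ?A) \<noteq> CARD('s)"
  proof -
    have c: "0 < CARD('s)" by (simp add: card_gt_0_iff)
    show ?thesis using rank_amat[OF st erg] rank_transpose[of ?A] c by linarith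
  qed
  then obtain y where y0: "y \<noteq> 0" and y: "transpose ?A *v y = 0"
    using matrix_nonfull_linear_equations_eq by blast
  have yeq: "y$t = (\<Sum>s\<in>UNIV. y$s * M s t)" for t
  proof -
    have "(transpose ?A *v y)$t = 0" using y by simp
    then have "y$t - (\<Sum>s\<in>UNIV. y$s * M s t) = 0" by (simp only: amat_tmv)
    then show ?thesis by linarith
  qed
  define u where "u s = \<bar>y$s\<bar>" for s
  have Mnn: "0 \<le> M s t" for s t using st by (simp add: stoch_def)
  have le: "u t \<le> (\<Sum>s\<in>UNIV. u s * M s t)" for t
  proof -
    have "u t = \<bar>\<Sum>s\<in>UNIV. y$s * M s t\<bar>" unfolding u_def by (subst yeq) rule
    also have "\<dots> \<le> (\<Sum>s\<in>UNIV. \<bar>y$s * M s t\<bar>)" by (rule sum_abs)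
    also have "\<dots> = (\<Sum>s\<in>UNIV. u s * M s t)" by (simp add: u_def abs_mult Mnn)
    finally show ?thesis .
  qed
  have "(\<Sum>t\<in>UNIV. (\<Sum>s\<in>UNIV. u s * M s t)) = (\<Sum>s\<in>UNIV. (\<Sum>t\<in>UNIV. u s * M s t))"
    by (rule sum.swap)
  also have "\<dots> = (\<Sum>s\<in>UNIV. u s * (\<Sum>t\<in>UNIV. M s t))"
    by (simp only: sum_distrib_left)
  also have "\<dots> = (\<Sum>s\<in>UNIV. u s)" using st by (simp add: stoch_def)
  finally have "(\<Sum>t\<in>UNIV. (\<Sum>s\<in>UNIV. u s * M s t) - u t) = 0"
    by (simp add: sum_subtractf)
  then have eq: "u t = (\<Sum>s\<in>UNIV. u s * M s t)" for t
    using sum_nonneg_eq_0_iff[of UNIV "\<lambda>t. (\<Sum>s\<in>UNIV. u s * M s t) - u t"] le by auto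
  obtain s0 where "y$s0 \<noteq> 0" using y0 by (auto simp: vec_eq_iff)
  then have "0 < u s0" by (simp add: u_def)
  moreover have "u s0 \<le> (\<Sum>s\<in>UNIV. u s)"
    by (rule member_le_sum) (auto simp: u_def)
  ultimately have Zpos: "0 < (\<Sum>s\<in>UNIV. u s)" by linarith
  define Z where "Z = (\<Sum>s\<in>UNIV. u s)"
  have "stationary M (\<lambda>s. u s / Z)"
    unfolding stationary_def
  proof (intro conjI allI)
    show "0 \<le> u s / Z" for s using Zpos by (simp add: Z_def u_def)
    show "(\<Sum>s\<in>UNIV. u s / Z) = 1" using Zpos by (simp add: Z_def sum_divide_distrib[symmetric])
    show "u t / Z = (\<Sum>s\<in>UNIV. u s / Z * M s t)" for t
      by (subst eq[of t]) (simp add: sum_divide_distrib)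
  qed
  then show ?thesis by blast
qed


lemma stat_sum1: "stationary M q \<Longrightarrow> (\<Sum>s\<in>UNIV. q s) = 1"
  unfolding stationary_def by (drule conjunct2, drule conjunct1) simp
lemma stat_nonneg: "stationary M q \<Longrightarrow> 0 \<le> q s"
  unfolding stationary_def by (drule conjunct1, erule allE, assumption)
lemma stat_eq: "stationary M q \<Longrightarrow> (\<Sum>s\<in>UNIV. q s * M s t) = q t"
  unfolding stationary_def by (drule conjunct2, drule conjunct2, drule spec[of _ t], erule sym)

lemma poisson:
  fixes M :: "'s::finite \<Rightarrow> 's \<Rightarrow> real"
  assumes st: "stoch M" and erg: "ergodic M" and q: "stationary M q"
    and g: "(\<Sum>s\<in>UNIV. q s * g s) = 0"
  shows "\<exists>V. \<forall>s. V s = g s + (\<Sum>t\<in>UNIV. M s t * V t)"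
proof -
  let ?A = "amat M"
  define vq :: "real^'s" where "vq = (\<chi> s. q s)"
  have qs: "\<And>t. (\<Sum>s\<in>UNIV. q s * M s t) = q t" using stat_eq[OF q] by blast
  have sub: "range ((*v) ?A) \<subseteq> {x. vq \<bullet> x = 0}"
  proof safe
    fix x :: "real^'s"
    have e1: "vq \<bullet> (?A *v x) = (\<Sum>s\<in>UNIV. q s * (x$s - (\<Sum>t\<in>UNIV. M s t * x$t)))"
      unfolding inner_vec_def by (simp only: amat_mv inner_real_def vq_def vec_lambda_beta)
    have e2: "(\<Sum>s\<in>UNIV. q s * (x$s - (\<Sum>t\<in>UNIV. M s t * x$t))) = (\<Sum>s\<in>UNIV. q s * x$s) - (\<Sum>s\<in>UNIV. \<Sum>t\<in>UNIV. q s * M s t * x$t)"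
      by (simp only: right_diff_distrib sum_subtractf sum_distrib_left mult.assoc)
    have e3: "(\<Sum>s\<in>UNIV. \<Sum>t\<in>UNIV. q s * M s t * x$t) = (\<Sum>t\<in>UNIV. \<Sum>s\<in>UNIV. q s * M s t * x$t)"
      by (rule sum.swap)
    have e4: "(\<Sum>t\<in>UNIV. \<Sum>s\<in>UNIV. q s * M s t * x$t) = (\<Sum>t\<in>UNIV. (\<Sum>s\<in>UNIV. q s * M s t) * x$t)"
      by (simp only: sum_distrib_right)
    have e5: "(\<Sum>t\<in>UNIV. (\<Sum>s\<in>UNIV. q s * M s t) * x$t) = (\<Sum>t\<in>UNIV. q t * x$t)" by (simp only: qs)
    show "vq \<bullet> (?A *v x) = 0" unfolding e1 e2 e3 e4 e5 by simp
  qed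
  have s1: "subspace (range ((*v) ?A))"
    by (rule linear_subspace_image) (auto simp: subspace_UNIV)
  have s2: "subspace {x. vq \<bullet> x = 0}" by (rule subspace_hyperplane)
  have "vq \<noteq> 0"
  proof
    assume "vq = 0"
    then have "\<forall>s. q s = 0" by (simp add: vq_def vec_eq_iff)
    then show False using stat_sum1[OF q] by simp
  qed
  then have d2: "dim {x. vq \<bullet> x = 0} = CARD('s) - 1" by (simp add: dim_hyperplane)
  have d1: "dim (range ((*v) ?A)) = CARD('s) - 1"
    using rank_amat[OF st erg] rank_dim_range[of ?A] by simp
  have eqr: "range ((*v) ?A) = {x. vq \<bullet> x = 0}"
    by (rule subspace_dim_equal[OF s1 s2 sub]) (simp add: d1 d2)
  define gv :: "real^'s" where "gv = (\<chi> s. g s)"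
  have "vq \<bullet> gv = 0" using g by (simp add: inner_vec_def vq_def gv_def)
  then have "gv \<in> range ((*v) ?A)" using eqr by simp
  then obtain x where x: "?A *v x = gv" by blast
  have "x$s = g s + (\<Sum>t\<in>UNIV. M s t * x$t)" for s
  proof -
    have "(?A *v x)$s = g s" using x by (simp add: gv_def)
    then have "x$s - (\<Sum>t\<in>UNIV. M s t * x$t) = g s" by (simp only: amat_mv)
    then show ?thesis by linarith
  qed
  then show ?thesis by blast
qed

lemma stationary_unique:
  fixes M :: "'s::finite \<Rightarrow> 's \<Rightarrow> real"
  assumes st: "stoch M" and erg: "ergodic M" and q1: "stationary M q1" and q2: "stationary M q2"
  shows "q1 = q2"
proof -
  define w where "w s = q2 s - q1 s" for s
  have ws: "(\<Sum>s\<in>UNIV. w s * M s t) = w t" for t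
  proof -
    have a: "(\<Sum>s\<in>UNIV. q1 s * M s t) = q1 t" using stat_eq[OF q1] by blast
    have b: "(\<Sum>s\<in>UNIV. q2 s * M s t) = q2 t" using stat_eq[OF q2] by blast
    show ?thesis unfolding w_def using a b by (simp add: left_diff_distrib sum_subtractf)
  qed
  have w1: "(\<Sum>s\<in>UNIV. w s) = 0" using stat_sum1[OF q1] stat_sum1[OF q2] by (simp add: w_def sum_subtractf)
  have orth: "(\<Sum>s\<in>UNIV. w s * z s) = 0" for z
  proof -
    define c where "c = (\<Sum>s\<in>UNIV. q1 s * z s)"
    have "(\<Sum>s\<in>UNIV. q1 s * (z s - c)) = 0"
      using stat_sum1[OF q1] by (simp add: right_diff_distrib sum_subtractf c_def sum_distrib_right[symmetric])
    then have "\<exists>V. \<forall>s. V s = (z s - c) + (\<Sum>t\<in>UNIV. M s t * V t)"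
      by (rule poisson[OF st erg q1])
    then obtain V where V: "\<forall>s. V s = (z s - c) + (\<Sum>t\<in>UNIV. M s t * V t)" by blast
    have zs: "z s = c + (V s - (\<Sum>t\<in>UNIV. M s t * V t))" for s using V[rule_format, of s] by linarith
    have "(\<Sum>s\<in>UNIV. w s * (\<Sum>t\<in>UNIV. M s t * V t)) = (\<Sum>s\<in>UNIV. \<Sum>t\<in>UNIV. w s * M s t * V t)"
      by (simp only: sum_distrib_left mult.assoc)
    also have "\<dots> = (\<Sum>t\<in>UNIV. \<Sum>s\<in>UNIV. w s * M s t * V t)" by (rule sum.swap)
    also have "\<dots> = (\<Sum>t\<in>UNIV. (\<Sum>s\<in>UNIV. w s * M s t) * V t)" by (simp only: sum_distrib_right)
    also have "\<dots> = (\<Sum>t\<in>UNIV. w t * V t)" by (simp only: ws)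
    finally have e: "(\<Sum>s\<in>UNIV. w s * (\<Sum>t\<in>UNIV. M s t * V t)) = (\<Sum>t\<in>UNIV. w t * V t)" .
    have wc: "(\<Sum>s\<in>UNIV. w s * c) = 0" using w1 by (simp only: sum_distrib_right[symmetric] mult_zero_left)
    have "(\<Sum>s\<in>UNIV. w s * z s) = (\<Sum>s\<in>UNIV. w s * c + w s * V s - w s * (\<Sum>t\<in>UNIV. M s t * V t))"
    proof (intro sum.cong refl)
      fix s show "w s * z s = w s * c + w s * V s - w s * (\<Sum>t\<in>UNIV. M s t * V t)"
        unfolding zs[of s] by (simp only: right_diff_distrib distrib_left)
    qed
    also have "\<dots> = (\<Sum>s\<in>UNIV. w s * c) + (\<Sum>s\<in>UNIV. w s * V s) - (\<Sum>s\<in>UNIV. w s * (\<Sum>t\<in>UNIV. M s t * V t))"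
      by (simp only: sum.distrib sum_subtractf)
    also have "\<dots> = 0" unfolding wc e by simp
    finally show ?thesis .
  qed
  have "(\<Sum>s\<in>UNIV. w s * w s) = 0" by (rule orth)
  then have "\<forall>s. w s * w s = 0" using sum_nonneg_eq_0_iff[of UNIV "\<lambda>s. w s * w s"] by simp
  then show ?thesis by (auto simp: w_def fun_eq_iff)
qed


locale mvg =
  fixes A :: "'i::finite \<Rightarrow> 'a set"
    and P :: "'s::finite \<Rightarrow> ('i \<Rightarrow> 'a) \<Rightarrow> 's \<Rightarrow> real"
    and r :: "'s \<Rightarrow> ('i \<Rightarrow> 'a) \<Rightarrow> real"
    and \<beta> :: real
  assumes acts: "\<forall>i. finite (A i) \<and> A i \<noteq> {}"
    and P_nonneg: "\<forall>s a s'. a \<in> jacts A \<longrightarrow> 0 \<le> P s a s'"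
    and P_sum: "\<forall>s a. a \<in> jacts A \<longrightarrow> (\<Sum>s'\<in>UNIV. P s a s') = 1"
    and erg: "\<forall>mu\<in>policies A. ergodic (chain A P mu)"
    and beta: "0 \<le> \<beta>"
begin

definition E :: "('i \<Rightarrow> 's \<Rightarrow> 'a \<Rightarrow> real) \<Rightarrow> ('s \<Rightarrow> ('i \<Rightarrow> 'a) \<Rightarrow> real) \<Rightarrow> real" where
  "E mu X = (\<Sum>s\<in>UNIV. stat A P mu s * (\<Sum>a\<in>jacts A. jp mu s a * X s a))"

lemma fin_A: "finite (A i)" using acts by blast

lemma fin_jacts: "finite (jacts A)"
  unfolding jacts_def by (rule finite_PiE) (auto simp: fin_A)

lemma pol_nonneg: "mu \<in> policies A \<Longrightarrow> 0 \<le> mu i s b"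
  unfolding policies_def is_policy_def by blast

lemma pol_sum: "mu \<in> policies A \<Longrightarrow> (\<Sum>b\<in>A i. mu i s b) = 1"
  unfolding policies_def is_policy_def by blast

lemma jp_nonneg: "mu \<in> policies A \<Longrightarrow> 0 \<le> jp mu s a"
  unfolding jp_def by (intro prod_nonneg) (auto simp: pol_nonneg)

lemma jp_sum: assumes "mu \<in> policies A" shows "(\<Sum>a\<in>jacts A. jp mu s a) = 1"
proof -
  have "(\<Sum>a\<in>jacts A. jp mu s a) = (\<Prod>i\<in>UNIV. \<Sum>b\<in>A i. mu i s b)"
    unfolding jacts_def jp_def by (rule prod_sum_PiE[symmetric]) (auto simp: fin_A)
  also have "\<dots> = 1" using pol_sum[OF assms] by simp
  finally show ?thesis .
qed

lemma chain_nonneg: "mu \<in> policies A \<Longrightarrow> 0 \<le> chain A P mu s t"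
  unfolding chain_def using P_nonneg by (intro sum_nonneg mult_nonneg_nonneg) (auto simp: jp_nonneg)

lemma chain_sum: assumes "mu \<in> policies A" shows "(\<Sum>t\<in>UNIV. chain A P mu s t) = 1"
proof -
  have "(\<Sum>t\<in>UNIV. chain A P mu s t) = (\<Sum>t\<in>UNIV. \<Sum>a\<in>jacts A. jp mu s a * P s a t)"
    by (simp only: chain_def)
  also have "\<dots> = (\<Sum>a\<in>jacts A. \<Sum>t\<in>UNIV. jp mu s a * P s a t)" by (rule sum.swap)
  also have "\<dots> = (\<Sum>a\<in>jacts A. jp mu s a * (\<Sum>t\<in>UNIV. P s a t))" by (simp only: sum_distrib_left)
  also have "\<dots> = (\<Sum>a\<in>jacts A. jp mu s a)" using P_sum by (intro sum.cong refl) simp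
  also have "\<dots> = 1" using jp_sum[OF assms] .
  finally show ?thesis .
qed

lemma chain_stoch: "mu \<in> policies A \<Longrightarrow> stoch (chain A P mu)"
  unfolding stoch_def using chain_nonneg chain_sum by blast

lemma chain_erg: "mu \<in> policies A \<Longrightarrow> ergodic (chain A P mu)" using erg by blast

lemma stat_stationary: assumes "mu \<in> policies A" shows "stationary (chain A P mu) (stat A P mu)"
proof -
  obtain q where q: "stationary (chain A P mu) q"
    using exists_stationary[OF chain_stoch[OF assms] chain_erg[OF assms]] by blast
  have uniq: "\<And>q'. stationary (chain A P mu) q' \<Longrightarrow> q' = q"
    using stationary_unique[OF chain_stoch[OF assms] chain_erg[OF assms] _ q] by blast
  show ?thesis unfolding stat_def by (rule theI[where P="stationary (chain A P mu)", OF q uniq])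
qed

lemma stat_pos': "mu \<in> policies A \<Longrightarrow> 0 < stat A P mu s"
  by (rule stat_pos[OF chain_stoch chain_erg stat_stationary])

lemma stat_sum': "mu \<in> policies A \<Longrightarrow> (\<Sum>s\<in>UNIV. stat A P mu s) = 1"
  by (rule stat_sum1[OF stat_stationary])

lemma stat_eq': "mu \<in> policies A \<Longrightarrow> (\<Sum>s\<in>UNIV. stat A P mu s * chain A P mu s t) = stat A P mu t"
  by (rule stat_eq[OF stat_stationary])

lemma inner_lin:
  assumes "mu \<in> policies A"
  shows "(\<Sum>a\<in>jacts A. jp mu s a * (\<alpha> * X a + b * Y a + c)) =
         \<alpha> * (\<Sum>a\<in>jacts A. jp mu s a * X a) + b * (\<Sum>a\<in>jacts A. jp mu s a * Y a) + c"
proof -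
  have "(\<Sum>a\<in>jacts A. jp mu s a * (\<alpha> * X a + b * Y a + c)) =
        (\<Sum>a\<in>jacts A. \<alpha> * (jp mu s a * X a) + b * (jp mu s a * Y a) + c * jp mu s a)"
    by (intro sum.cong refl) (simp add: algebra_simps)
  also have "\<dots> = \<alpha> * (\<Sum>a\<in>jacts A. jp mu s a * X a) + b * (\<Sum>a\<in>jacts A. jp mu s a * Y a) + c * (\<Sum>a\<in>jacts A. jp mu s a)"
    by (simp only: sum.distrib sum_distrib_left)
  finally show ?thesis using jp_sum[OF assms] by simp
qed

lemma E_lin:
  assumes "mu \<in> policies A"
  shows "E mu (\<lambda>s a. \<alpha> * X s a + b * Y s a + c) = \<alpha> * E mu X + b * E mu Y + c"
proof -
  have "E mu (\<lambda>s a. \<alpha> * X s a + b * Y s a + c) =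
     (\<Sum>s\<in>UNIV. stat A P mu s * (\<alpha> * (\<Sum>a\<in>jacts A. jp mu s a * X s a) + b * (\<Sum>a\<in>jacts A. jp mu s a * Y s a) + c))"
    unfolding E_def by (simp only: inner_lin[OF assms])
  also have "\<dots> = (\<Sum>s\<in>UNIV. \<alpha> * (stat A P mu s * (\<Sum>a\<in>jacts A. jp mu s a * X s a)) + b * (stat A P mu s * (\<Sum>a\<in>jacts A. jp mu s a * Y s a)) + c * stat A P mu s)"
    by (intro sum.cong refl) (simp add: algebra_simps)
  also have "\<dots> = \<alpha> * E mu X + b * E mu Y + c * (\<Sum>s\<in>UNIV. stat A P mu s)"
    unfolding E_def by (simp only: sum.distrib sum_distrib_left)
  finally show ?thesis using stat_sum'[OF assms] by simp
qed

end

context mvg begin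

lemma eta_E: "eta A P r mu = E mu r"
  unfolding eta_def E_def ..

lemma zeta_E: "zeta A P r mu = E mu (\<lambda>s a. (r s a - eta A P r mu)\<^sup>2)"
  unfolding zeta_def E_def ..

lemma E_sq:
  assumes "mu \<in> policies A"
  shows "E mu (\<lambda>s a. (r s a - y)\<^sup>2) = zeta A P r mu + (eta A P r mu - y)\<^sup>2"
proof -
  have sq: "\<And>z. (\<lambda>s a. (r s a - z)\<^sup>2) = (\<lambda>s a. 1 * (r s a)\<^sup>2 + (-2*z) * r s a + z\<^sup>2)"
    by (intro ext) (simp add: power2_eq_square algebra_simps)
  have a: "E mu (\<lambda>s a. (r s a - y)\<^sup>2) = E mu (\<lambda>s a. (r s a)\<^sup>2) + (-2*y) * E mu r + y\<^sup>2"
    unfolding sq[of y] E_lin[OF assms] by simp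
  have b: "zeta A P r mu = E mu (\<lambda>s a. (r s a)\<^sup>2) + (-2*eta A P r mu) * E mu r + (eta A P r mu)\<^sup>2"
    unfolding zeta_E sq[of "eta A P r mu"] E_lin[OF assms] by simp
  show ?thesis unfolding a b eta_E by (simp add: power2_eq_square algebra_simps)
qed

lemma E_fsa:
  assumes "mu' \<in> policies A"
  shows "E mu' (fsa A P r \<beta> mu) = Jmv A P r \<beta> mu' - \<beta> * (eta A P r mu' - eta A P r mu)\<^sup>2"
proof -
  have f: "fsa A P r \<beta> mu = (\<lambda>s a. 1 * r s a + (-\<beta>) * (r s a - eta A P r mu)\<^sup>2 + 0)"
    by (intro ext) (simp add: fsa_def)
  have "E mu' (fsa A P r \<beta> mu) = E mu' r - \<beta> * E mu' (\<lambda>s a. (r s a - eta A P r mu)\<^sup>2)"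
    unfolding f E_lin[OF assms] by simp
  also have "\<dots> = eta A P r mu' - \<beta> * (zeta A P r mu' + (eta A P r mu' - eta A P r mu)\<^sup>2)"
    unfolding E_sq[OF assms] eta_E ..
  finally show ?thesis unfolding Jmv_def by (simp add: algebra_simps)
qed

lemma chainV:
  "(\<Sum>a\<in>jacts A. jp mu s a * (\<Sum>t\<in>UNIV. P s a t * V t)) = (\<Sum>t\<in>UNIV. chain A P mu s t * V t)"
proof -
  have "(\<Sum>a\<in>jacts A. jp mu s a * (\<Sum>t\<in>UNIV. P s a t * V t)) = (\<Sum>a\<in>jacts A. \<Sum>t\<in>UNIV. jp mu s a * P s a t * V t)"
    by (simp only: sum_distrib_left mult.assoc)
  also have "\<dots> = (\<Sum>t\<in>UNIV. \<Sum>a\<in>jacts A. jp mu s a * P s a t * V t)" by (rule sum.swap)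
  also have "\<dots> = (\<Sum>t\<in>UNIV. chain A P mu s t * V t)" unfolding chain_def by (simp only: sum_distrib_right)
  finally show ?thesis .
qed

lemma inner_pdl:
  assumes "mu \<in> policies A"
  shows "(\<Sum>a\<in>jacts A. jp mu s a * (w s a - c + (\<Sum>t\<in>UNIV. P s a t * V t) - V s)) =
         (\<Sum>a\<in>jacts A. jp mu s a * w s a) - c + (\<Sum>t\<in>UNIV. chain A P mu s t * V t) - V s"
proof -
  have "(\<Sum>a\<in>jacts A. jp mu s a * (w s a - c + (\<Sum>t\<in>UNIV. P s a t * V t) - V s)) =
        (\<Sum>a\<in>jacts A. jp mu s a * w s a + jp mu s a * (\<Sum>t\<in>UNIV. P s a t * V t) - (c + V s) * jp mu s a)"
    by (intro sum.cong refl) (simp add: algebra_simps)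
  also have "\<dots> = (\<Sum>a\<in>jacts A. jp mu s a * w s a) + (\<Sum>a\<in>jacts A. jp mu s a * (\<Sum>t\<in>UNIV. P s a t * V t))
        - (c + V s) * (\<Sum>a\<in>jacts A. jp mu s a)"
    by (simp only: sum.distrib sum_subtractf sum_distrib_left)
  also have "\<dots> = (\<Sum>a\<in>jacts A. jp mu s a * w s a) + (\<Sum>t\<in>UNIV. chain A P mu s t * V t) - (c + V s)"
    unfolding chainV jp_sum[OF assms] by simp
  finally show ?thesis by simp
qed

lemma pdl:
  assumes "mu \<in> policies A"
  shows "E mu (\<lambda>s a. w s a - c + (\<Sum>t\<in>UNIV. P s a t * V t) - V s) = E mu w - c"
proof -
  let ?pi = "stat A P mu"
  let ?W = "\<lambda>s. (\<Sum>a\<in>jacts A. jp mu s a * w s a)"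
  let ?C = "\<lambda>s. (\<Sum>t\<in>UNIV. chain A P mu s t * V t)"
  have "E mu (\<lambda>s a. w s a - c + (\<Sum>t\<in>UNIV. P s a t * V t) - V s) = (\<Sum>s\<in>UNIV. ?pi s * (?W s - c + ?C s - V s))"
    unfolding E_def inner_pdl[OF assms] ..
  also have "\<dots> = (\<Sum>s\<in>UNIV. ?pi s * ?W s + ?pi s * ?C s - ?pi s * V s - c * ?pi s)"
    by (intro sum.cong refl) (simp add: algebra_simps)
  also have "\<dots> = (\<Sum>s\<in>UNIV. ?pi s * ?W s) + (\<Sum>s\<in>UNIV. ?pi s * ?C s) - (\<Sum>s\<in>UNIV. ?pi s * V s) - c * (\<Sum>s\<in>UNIV. ?pi s)"
    by (simp only: sum.distrib sum_subtractf sum_distrib_left)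
  also have "(\<Sum>s\<in>UNIV. ?pi s * ?C s) = (\<Sum>s\<in>UNIV. \<Sum>t\<in>UNIV. ?pi s * chain A P mu s t * V t)"
    by (simp only: sum_distrib_left mult.assoc)
  also have "\<dots> = (\<Sum>t\<in>UNIV. \<Sum>s\<in>UNIV. ?pi s * chain A P mu s t * V t)" by (rule sum.swap)
  also have "\<dots> = (\<Sum>t\<in>UNIV. (\<Sum>s\<in>UNIV. ?pi s * chain A P mu s t) * V t)" by (simp only: sum_distrib_right)
  also have "\<dots> = (\<Sum>t\<in>UNIV. ?pi t * V t)" by (simp only: stat_eq'[OF assms])
  finally show ?thesis unfolding stat_sum'[OF assms] E_def by simp
qed

end

context mvg begin

lemma Vf_poisson:
  assumes mu: "mu \<in> policies A"
  shows "\<forall>s. Vf A P r \<beta> mu s = fs A P r \<beta> mu s - Jmv A P r \<beta> mu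
                + (\<Sum>s'\<in>UNIV. chain A P mu s s' * Vf A P r \<beta> mu s')"
proof -
  let ?pi = "stat A P mu"
  have "(\<Sum>s\<in>UNIV. ?pi s * fs A P r \<beta> mu s) = E mu (fsa A P r \<beta> mu)"
    unfolding E_def fs_def ..
  also have "\<dots> = Jmv A P r \<beta> mu" unfolding E_fsa[OF mu] by simp
  finally have a: "(\<Sum>s\<in>UNIV. ?pi s * fs A P r \<beta> mu s) = Jmv A P r \<beta> mu" .
  have "(\<Sum>s\<in>UNIV. ?pi s * (fs A P r \<beta> mu s - Jmv A P r \<beta> mu)) =
        (\<Sum>s\<in>UNIV. ?pi s * fs A P r \<beta> mu s) - Jmv A P r \<beta> mu * (\<Sum>s\<in>UNIV. ?pi s)"
    by (simp add: right_diff_distrib sum_subtractf sum_distrib_left mult.commute)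
  also have "\<dots> = 0" unfolding a stat_sum'[OF mu] by simp
  finally have "\<exists>V. \<forall>s. V s = (fs A P r \<beta> mu s - Jmv A P r \<beta> mu) + (\<Sum>t\<in>UNIV. chain A P mu s t * V t)"
    by (rule poisson[OF chain_stoch[OF mu] chain_erg[OF mu] stat_stationary[OF mu]])
  then show ?thesis unfolding Vf_def by (rule someI_ex)
qed

lemma Af_expand:
  "Af A P r \<beta> mu s a = fsa A P r \<beta> mu s a - Jmv A P r \<beta> mu
      + (\<Sum>t\<in>UNIV. P s a t * Vf A P r \<beta> mu t) - Vf A P r \<beta> mu s"
  unfolding Af_def Qf_def ..

lemma Af_avg0:
  assumes mu: "mu \<in> policies A"
  shows "(\<Sum>a\<in>jacts A. jp mu s a * Af A P r \<beta> mu s a) = 0"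
proof -
  have "(\<Sum>a\<in>jacts A. jp mu s a * Af A P r \<beta> mu s a) =
     (\<Sum>a\<in>jacts A. jp mu s a * fsa A P r \<beta> mu s a) - Jmv A P r \<beta> mu
       + (\<Sum>t\<in>UNIV. chain A P mu s t * Vf A P r \<beta> mu t) - Vf A P r \<beta> mu s"
    unfolding Af_expand by (rule inner_pdl[OF mu])
  also have "\<dots> = 0" using Vf_poisson[OF mu] unfolding fs_def by (metis diff_self)
  finally show ?thesis .
qed

lemma J_diff:
  assumes mu': "mu' \<in> policies A"
  shows "Jmv A P r \<beta> mu' - Jmv A P r \<beta> mu = E mu' (Af A P r \<beta> mu) + \<beta> * (eta A P r mu' - eta A P r mu)\<^sup>2"
proof -
  have "E mu' (Af A P r \<beta> mu) = E mu' (fsa A P r \<beta> mu) - Jmv A P r \<beta> mu"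
    unfolding Af_expand by (rule pdl[OF mu'])
  then show ?thesis unfolding E_fsa[OF mu'] by simp
qed

subsection \<open>Deterministic policies\<close>

lemma detjoint_pol: assumes "det_joint A d" shows "djoint d \<in> policies A"
  unfolding policies_def is_policy_def
proof (intro CollectI allI conjI impI)
  fix i s b
  show "0 \<le> djoint d i s b" by (simp add: djoint_def detp_def)
  show "b \<notin> A i \<Longrightarrow> djoint d i s b = 0"
    using assms by (auto simp: djoint_def detp_def det_joint_def det_policy_def)
  have "d i s \<in> A i" using assms by (simp add: det_joint_def det_policy_def)
  then show "sum (djoint d i s) (A i) = 1"
    by (simp add: djoint_def detp_def fin_A)
qed

lemma jp_det: "jp (djoint d) s a = (if a = (\<lambda>i. d i s) then 1 else 0)"
proof (cases "a = (\<lambda>i. d i s)")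
  case True then show ?thesis by (simp add: jp_def djoint_def detp_def)
next
  case False
  then obtain i where "a i \<noteq> d i s" by auto
  then have "djoint d i s (a i) = 0" by (simp add: djoint_def detp_def)
  then have "jp (djoint d) s a = 0" unfolding jp_def by (intro prod_zero) auto
  then show ?thesis using False by simp
qed

lemma dets_jacts: "det_joint A d \<Longrightarrow> (\<lambda>i. d i s) \<in> jacts A"
  by (auto simp: jacts_def det_joint_def det_policy_def PiE_iff)

lemma G_det:
  assumes "det_joint A d"
  shows "(\<Sum>a\<in>jacts A. jp (djoint d) s a * X a) = X (\<lambda>i. d i s)"
proof -
  have "(\<Sum>a\<in>jacts A. jp (djoint d) s a * X a) = (\<Sum>a\<in>jacts A. if a = (\<lambda>i. d i s) then X a else 0)"
    by (intro sum.cong refl) (simp add: jp_det)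
  also have "\<dots> = X (\<lambda>i. d i s)" using dets_jacts[OF assms] fin_jacts by simp
  finally show ?thesis .
qed

lemma E_det:
  assumes "det_joint A d"
  shows "E (djoint d) X = (\<Sum>s\<in>UNIV. stat A P (djoint d) s * X s (\<lambda>i. d i s))"
  unfolding E_def G_det[OF assms] ..

lemma expA_det:
  assumes d: "det_joint A d" and b: "b \<in> A i"
  shows "expA A P r \<beta> (djoint d) i s b = Af A P r \<beta> (djoint d) s ((\<lambda>j. d j s)(i := b))"
proof -
  let ?a0 = "(\<lambda>j. d j s)(i := b)"
  have "expA A P r \<beta> (djoint d) i s b =
     (\<Sum>a\<in>{a\<in>jacts A. a i = b}. if a = ?a0 then Af A P r \<beta> (djoint d) s a else 0)"
    unfolding expA_def
  proof (intro sum.cong refl)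
    fix a assume "a \<in> {a\<in>jacts A. a i = b}"
    then have ai: "a i = b" by simp
    show "(\<Prod>j\<in>UNIV - {i}. djoint d j s (a j)) * Af A P r \<beta> (djoint d) s a =
          (if a = ?a0 then Af A P r \<beta> (djoint d) s a else 0)"
    proof (cases "a = ?a0")
      case True
      then show ?thesis by (simp add: djoint_def detp_def)
    next
      case False
      then obtain j where "a j \<noteq> ?a0 j" unfolding fun_eq_iff by blast
      with ai have j: "j \<noteq> i" "a j \<noteq> d j s" by (auto split: if_splits)
      then have "djoint d j s (a j) = 0" by (simp add: djoint_def detp_def)
      then have "(\<Prod>j\<in>UNIV - {i}. djoint d j s (a j)) = 0" using j by (intro prod_zero) auto
      then show ?thesis using False by simp
    qed
  qed
  also have "\<dots> = Af A P r \<beta> (djoint d) s ?a0"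
  proof -
    have "?a0 \<in> {a\<in>jacts A. a i = b}"
      using d b by (auto simp: jacts_def det_joint_def det_policy_def PiE_iff)
    moreover have "finite {a\<in>jacts A. a i = b}" using fin_jacts by simp
    ultimately show ?thesis by (simp add: sum.delta')
  qed
  finally show ?thesis .
qed

end


lemma sweep_keep: "sweep A P r \<beta> d ps d' \<Longrightarrow> j \<notin> set ps \<Longrightarrow> d' j = d j"
  by (induction rule: sweep.induct) auto

lemma sweep_fix:
  "sweep A P r \<beta> d ps d' \<Longrightarrow> distinct ps \<Longrightarrow> d' = d \<Longrightarrow> i \<in> set ps \<Longrightarrow>
     d i s \<in> argmaxA A P r \<beta> (djoint d) i s"
proof (induction arbitrary: i rule: sweep.induct)
  case (sweep_Nil d)
  then show ?case by simp
next
  case (sweep_Cons e d i0 "is" d')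
  have "i0 \<notin> set is" using sweep_Cons.prems(1) by simp
  then have "d' i0 = e" using sweep_keep[OF sweep_Cons.hyps(2)] by simp
  then have e: "e = d i0" using sweep_Cons.prems(2) by simp
  then have dd: "d(i0 := e) = d" by simp
  show ?case
  proof (cases "i = i0")
    case True
    then show ?thesis using sweep_Cons.hyps(1) e by simp
  next
    case False
    then have "i \<in> set is" using sweep_Cons.prems(3) by simp
    moreover have "distinct is" using sweep_Cons.prems(1) by simp
    moreover have "d' = d(i0 := e)" using dd sweep_Cons.prems(2) by simp
    ultimately show ?thesis using sweep_Cons.IH dd by metis
  qed
qed

lemma argmaxA_sub: "argmaxA A P r \<beta> mu i s \<subseteq> A i"
  unfolding argmaxA_def by blast

lemma sweep_det: "sweep A P r \<beta> d ps d' \<Longrightarrow> det_joint A d \<Longrightarrow> det_joint A d'"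
proof (induction rule: sweep.induct)
  case (sweep_Nil d) then show ?case by simp
next
  case (sweep_Cons e d i "is" d')
  have "det_joint A (d(i := e))"
    using sweep_Cons.prems sweep_Cons.hyps(1) argmaxA_sub
    unfolding det_joint_def det_policy_def by fastforce
  then show ?case by (rule sweep_Cons.IH)
qed

lemma mvmapi_fix: "mvmapi A P r \<beta> d0 dt \<Longrightarrow> dt i s \<in> argmaxA A P r \<beta> (djoint dt) i s"
proof (induction rule: mvmapi.induct)
  case (mvmapi_stop ps d)
  then show ?case using sweep_fix[OF mvmapi_stop(3) mvmapi_stop(1)] by simp
next
  case (mvmapi_step ps d d' out)
  then show ?case by simp
qed

lemma mvmapi_det: "mvmapi A P r \<beta> d0 dt \<Longrightarrow> det_joint A d0 \<Longrightarrow> det_joint A dt"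
proof (induction rule: mvmapi.induct)
  case (mvmapi_stop ps d) then show ?case by simp
next
  case (mvmapi_step ps d d' out)
  then show ?case using sweep_det by blast
qed

lemma modified_props:
  "modified A P r \<beta> d0 dt \<Longrightarrow> det_joint A d0 \<Longrightarrow>
    det_joint A dt \<and> (\<forall>i s. dt i s \<in> argmaxA A P r \<beta> (djoint dt) i s) \<and>
    (\<forall>i. \<forall>e\<in>Dset A P r \<beta> dt i. eta A P r (djoint (dt(i := e))) = eta A P r (djoint dt))"
proof (induction rule: modified.induct)
  case (modified_done d0 dt)
  then show ?case using mvmapi_det mvmapi_fix by blast
next
  case (modified_restart d0 dt i e out)
  have "det_joint A dt" using mvmapi_det modified_restart.hyps(1) modified_restart.prems by blast
  moreover have "det_policy A i e" using modified_restart.hyps(3) by (simp add: Dset_def)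
  ultimately have "det_joint A (dt(i := e))" by (simp add: det_joint_def)
  then show ?case using modified_restart.IH by blast
qed

context mvg begin

definition mix :: "('i \<Rightarrow> 's \<Rightarrow> 'a) \<Rightarrow> 'i \<Rightarrow> ('s \<Rightarrow> 'a) \<Rightarrow> real \<Rightarrow> ('i \<Rightarrow> 's \<Rightarrow> 'a \<Rightarrow> real)" where
  "mix d i e \<delta> = (djoint d)(i := (\<lambda>s b. (1 - \<delta>) * detp (d i) s b + \<delta> * detp e s b))"

lemma mix_pol:
  assumes d: "det_joint A d" and e: "det_policy A i e" and d0: "0 \<le> \<delta>" and d1: "\<delta> \<le> 1"
  shows "mix d i e \<delta> \<in> policies A"
  unfolding policies_def
proof (intro CollectI allI)
  fix j
  show "is_policy A j (mix d i e \<delta> j)"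
  proof (cases "j = i")
    case False
    then have "mix d i e \<delta> j = djoint d j" by (simp add: mix_def)
    then show ?thesis using detjoint_pol[OF d] unfolding policies_def by simp
  next
    case True
    have di: "d i s \<in> A i" for s using d by (simp add: det_joint_def det_policy_def)
    have ei: "e s \<in> A i" for s using e by (simp add: det_policy_def)
    show ?thesis unfolding is_policy_def
    proof (intro allI conjI impI)
      fix s b
      show "0 \<le> mix d i e \<delta> j s b" using True d0 d1 by (simp add: mix_def detp_def)
      show "b \<notin> A j \<Longrightarrow> mix d i e \<delta> j s b = 0" using True di[of s] ei[of s]
        by (auto simp: mix_def detp_def)
    next
      fix s
      have "(\<Sum>b\<in>A i. (1 - \<delta>) * detp (d i) s b + \<delta> * detp e s b) =
            (1 - \<delta>) * (\<Sum>b\<in>A i. detp (d i) s b) + \<delta> * (\<Sum>b\<in>A i. detp e s b)"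
        by (simp add: sum.distrib sum_distrib_left)
      also have "\<dots> = 1" using di[of s] ei[of s] by (simp add: detp_def fin_A)
      finally show "sum (mix d i e \<delta> j s) (A j) = 1" using True by (simp add: mix_def)
    qed
  qed
qed

lemma jp_mix:
  "jp (mix d i e \<delta>) s a = (1 - \<delta>) * jp (djoint d) s a + \<delta> * jp (djoint (d(i := e))) s a"
proof -
  have split: "jp mu s a = mu i s (a i) * (\<Prod>j\<in>UNIV - {i}. mu j s (a j))" for mu
    unfolding jp_def by (rule prod.remove) auto
  have R1: "(\<Prod>j\<in>UNIV - {i}. mix d i e \<delta> j s (a j)) = (\<Prod>j\<in>UNIV - {i}. djoint d j s (a j))"
    by (intro prod.cong refl) (simp add: mix_def)
  have R2: "(\<Prod>j\<in>UNIV - {i}. djoint (d(i := e)) j s (a j)) = (\<Prod>j\<in>UNIV - {i}. djoint d j s (a j))"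
    by (intro prod.cong refl) (simp add: djoint_def)
  show ?thesis unfolding split[of "mix d i e \<delta>"] split[of "djoint d"] split[of "djoint (d(i := e))"] R1 R2
    by (simp add: mix_def djoint_def algebra_simps)
qed

lemma G_mix:
  assumes d: "det_joint A d" and e: "det_policy A i e"
  shows "(\<Sum>a\<in>jacts A. jp (mix d i e \<delta>) s a * X a) =
         (1 - \<delta>) * X (\<lambda>j. d j s) + \<delta> * X ((\<lambda>j. d j s)(i := e s))"
proof -
  have d': "det_joint A (d(i := e))" using d e by (simp add: det_joint_def)
  have "(\<Sum>a\<in>jacts A. jp (mix d i e \<delta>) s a * X a) =
        (\<Sum>a\<in>jacts A. (1 - \<delta>) * (jp (djoint d) s a * X a) + \<delta> * (jp (djoint (d(i := e))) s a * X a))"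
    by (intro sum.cong refl) (simp add: jp_mix algebra_simps)
  also have "\<dots> = (1 - \<delta>) * (\<Sum>a\<in>jacts A. jp (djoint d) s a * X a) + \<delta> * (\<Sum>a\<in>jacts A. jp (djoint (d(i := e))) s a * X a)"
    by (simp only: sum.distrib sum_distrib_left)
  also have "\<dots> = (1 - \<delta>) * X (\<lambda>j. d j s) + \<delta> * X (\<lambda>j. (d(i := e)) j s)"
    unfolding G_det[OF d] G_det[OF d'] ..
  also have "(\<lambda>j. (d(i := e)) j s) = (\<lambda>j. d j s)(i := e s)" by auto
  finally show ?thesis .
qed

lemma chain_mix_ge:
  assumes d: "det_joint A d" and e: "det_policy A i e" and d0: "0 \<le> \<delta>"
  shows "(1 - \<delta>) * chain A P (djoint d) s t \<le> chain A P (mix d i e \<delta>) s t"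
proof -
  have "chain A P (mix d i e \<delta>) s t =
        (1 - \<delta>) * chain A P (djoint d) s t + \<delta> * chain A P (djoint (d(i := e))) s t"
  proof -
    have "chain A P (mix d i e \<delta>) s t = (\<Sum>a\<in>jacts A. (1 - \<delta>) * (jp (djoint d) s a * P s a t) + \<delta> * (jp (djoint (d(i := e))) s a * P s a t))"
      unfolding chain_def jp_mix by (intro sum.cong refl) (simp add: algebra_simps)
    also have "\<dots> = (1 - \<delta>) * chain A P (djoint d) s t + \<delta> * chain A P (djoint (d(i := e))) s t"
      unfolding chain_def by (simp only: sum.distrib sum_distrib_left)
    finally show ?thesis .
  qed
  moreover have "0 \<le> chain A P (djoint (d(i := e))) s t"
    using d e by (intro chain_nonneg detjoint_pol) (simp add: det_joint_def)
  ultimately show ?thesis using d0 by simp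
qed

end

lemma mpow_nonneg': "(\<forall>s t. 0 \<le> N s t) \<Longrightarrow> 0 \<le> mpow N n s t"
  by (induction n arbitrary: t) (auto intro!: sum_nonneg)

lemma mpow_mono:
  assumes N: "\<forall>s t. 0 \<le> N s t" and NM: "\<forall>s t. c * N s t \<le> M s t" and c: "0 \<le> c"
  shows "c ^ n * mpow N n s t \<le> mpow M n s t"
proof (induction n arbitrary: t)
  case 0 then show ?case by simp
next
  case (Suc n)
  have "c ^ Suc n * mpow N (Suc n) s t = (\<Sum>u\<in>UNIV. (c ^ n * mpow N n s u) * (c * N u t))"
    by (simp add: sum_distrib_left algebra_simps)
  also have "\<dots> \<le> (\<Sum>u\<in>UNIV. mpow M n s u * M u t)"
  proof (rule sum_mono)
    fix u
    have h1: "c ^ n * mpow N n s u \<le> mpow M n s u" by (rule Suc)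
    have h2: "c * N u t \<le> M u t" using NM by blast
    have h3: "0 \<le> c ^ n * mpow N n s u" using mpow_nonneg'[OF N] c by simp
    have h4: "0 \<le> c * N u t" using N c by simp
    show "(c ^ n * mpow N n s u) * (c * N u t) \<le> mpow M n s u * M u t"
      by (rule mult_mono[OF h1 h2 _ h4]) (use h1 h3 in linarith)
  qed
  finally show ?case by simp
qed


lemma fin_argmax:
  fixes f :: "'x \<Rightarrow> real"
  assumes "finite S" "S \<noteq> {}"
  shows "\<exists>x\<in>S. \<forall>y\<in>S. f y \<le> f x"
proof -
  have "Max (f ` S) \<in> f ` S" using assms by (intro Max_in) auto
  then obtain x where x: "x \<in> S" "Max (f ` S) = f x" by blast
  have "\<forall>y\<in>S. f y \<le> f x"
  proof
    fix y assume "y \<in> S"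
    then have "f y \<le> Max (f ` S)" using assms(1) by (intro Max_ge) auto
    then show "f y \<le> f x" using x(2) by simp
  qed
  then show ?thesis using x(1) by blast
qed

context mvg begin

lemma expA_dt0:
  assumes d: "det_joint A d"
  shows "expA A P r \<beta> (djoint d) i s (d i s) = 0"
proof -
  have di: "d i s \<in> A i" using d by (simp add: det_joint_def det_policy_def)
  have eq: "(\<lambda>j. d j s)(i := d i s) = (\<lambda>j. d j s)" by auto
  have "expA A P r \<beta> (djoint d) i s (d i s) = Af A P r \<beta> (djoint d) s (\<lambda>j. d j s)"
    unfolding expA_det[OF d di] eq ..
  also have "\<dots> = (\<Sum>a\<in>jacts A. jp (djoint d) s a * Af A P r \<beta> (djoint d) s a)"
    unfolding G_det[OF d] ..
  also have "\<dots> = 0" by (rule Af_avg0[OF detjoint_pol[OF d]])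
  finally show ?thesis .
qed

lemma argmax_eq:
  "b \<in> argmaxA A P r \<beta> mu i s \<Longrightarrow> b' \<in> argmaxA A P r \<beta> mu i s \<Longrightarrow>
     expA A P r \<beta> mu i s b = expA A P r \<beta> mu i s b'"
  unfolding argmaxA_def by (auto intro: antisym)

lemma part1a:
  assumes dt: "det_joint A dt"
    and fx: "\<forall>i s. dt i s \<in> argmaxA A P r \<beta> (djoint dt) i s"
    and etaeq: "\<forall>i. \<forall>e\<in>Dset A P r \<beta> dt i. eta A P r (djoint (dt(i := e))) = eta A P r (djoint dt)"
    and d: "d \<in> Dmu A P r \<beta> dt"
  shows "Jmv A P r \<beta> (djoint dt) = Jmv A P r \<beta> (djoint d)"
proof -
  obtain i e where de: "d = dt(i := e)" and e: "e \<in> Dset A P r \<beta> dt i"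
    using d unfolding Dmu_def by blast
  have edet: "det_policy A i e" and emax: "\<forall>s. e s \<in> argmaxA A P r \<beta> (djoint dt) i s"
    using e unfolding Dset_def by auto
  have ddet: "det_joint A d" using dt edet de by (simp add: det_joint_def)
  have eta: "eta A P r (djoint d) = eta A P r (djoint dt)" using etaeq e de by blast
  have zero: "Af A P r \<beta> (djoint dt) s (\<lambda>j. d j s) = 0" for s
  proof -
    have es: "e s \<in> A i" using edet by (simp add: det_policy_def)
    have "(\<lambda>j. d j s) = (\<lambda>j. dt j s)(i := e s)" using de by auto
    then have "Af A P r \<beta> (djoint dt) s (\<lambda>j. d j s) = expA A P r \<beta> (djoint dt) i s (e s)"
      using expA_det[OF dt es] by simp
    also have "\<dots> = expA A P r \<beta> (djoint dt) i s (dt i s)"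
      using argmax_eq emax fx by blast
    also have "\<dots> = 0" by (rule expA_dt0[OF dt])
    finally show ?thesis .
  qed
  have "E (djoint d) (Af A P r \<beta> (djoint dt)) = 0"
    unfolding E_det[OF ddet] zero by simp
  then show ?thesis using J_diff[OF detjoint_pol[OF ddet], of "djoint dt"] eta by simp
qed

lemma finite_D: "finite {d :: 'i \<Rightarrow> 's \<Rightarrow> 'a. det_joint A d}"
proof -
  have eq: "{d. det_joint A d} = Pi\<^sub>E UNIV (\<lambda>i. Pi\<^sub>E UNIV (\<lambda>s::'s. A i))"
    by (auto simp: det_joint_def det_policy_def PiE_iff)
  show ?thesis unfolding eq by (intro finite_PiE) (auto intro!: finite_PiE simp: fin_A)
qed

lemma nonempty_D: "\<exists>d :: 'i \<Rightarrow> 's \<Rightarrow> 'a. det_joint A d"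
proof -
  have "det_joint A (\<lambda>i (s::'s). SOME b. b \<in> A i)"
    unfolding det_joint_def det_policy_def
  proof (intro allI)
    fix i :: 'i and s :: 's
    have "A i \<noteq> {}" using acts by blast
    then show "(SOME b. b \<in> A i) \<in> A i" by (simp add: some_in_eq)
  qed
  then show ?thesis by blast
qed

lemma improve:
  assumes dst: "det_joint A dst"
    and best: "\<forall>d. det_joint A d \<longrightarrow> E (djoint d) w \<le> E (djoint dst) w"
    and mu: "mu \<in> policies A"
  shows "E mu w \<le> E (djoint dst) w"
proof -
  let ?nu = "djoint dst"
  have nu: "?nu \<in> policies A" by (rule detjoint_pol[OF dst])
  define c where "c = E ?nu w"
  let ?pi = "stat A P ?nu"
  have "(\<Sum>s\<in>UNIV. ?pi s * ((\<Sum>a\<in>jacts A. jp ?nu s a * w s a) - c)) =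
        E ?nu w - c * (\<Sum>s\<in>UNIV. ?pi s)"
    unfolding E_def by (simp add: right_diff_distrib sum_subtractf sum_distrib_left mult.commute)
  also have "\<dots> = 0" unfolding stat_sum'[OF nu] c_def by simp
  finally have "\<exists>V. \<forall>s. V s = ((\<Sum>a\<in>jacts A. jp ?nu s a * w s a) - c) + (\<Sum>t\<in>UNIV. chain A P ?nu s t * V t)"
    by (rule poisson[OF chain_stoch[OF nu] chain_erg[OF nu] stat_stationary[OF nu]])
  then obtain V where V: "\<forall>s. V s = ((\<Sum>a\<in>jacts A. jp ?nu s a * w s a) - c) + (\<Sum>t\<in>UNIV. chain A P ?nu s t * V t)"
    by blast
  define G where "G s a = w s a - c + (\<Sum>t\<in>UNIV. P s a t * V t) - V s" for s a
  have Gavg: "(\<Sum>a\<in>jacts A. jp ?nu s a * G s a) = 0" for s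
    unfolding G_def inner_pdl[OF nu] using V by (metis diff_self)
  have Gd: "G s (\<lambda>i. dst i s) = 0" for s
    using Gavg[of s] unfolding G_det[OF dst] .
  have "\<forall>s. \<exists>a. a \<in> jacts A \<and> (\<forall>a'\<in>jacts A. G s a' \<le> G s a)"
  proof
    fix s
    have "jacts A \<noteq> {}" using dets_jacts[OF dst] by blast
    then show "\<exists>a. a \<in> jacts A \<and> (\<forall>a'\<in>jacts A. G s a' \<le> G s a)"
      using fin_argmax[OF fin_jacts, of "G s"] by blast
  qed
  then obtain ast where ast: "\<forall>s. ast s \<in> jacts A \<and> (\<forall>a'\<in>jacts A. G s a' \<le> G s (ast s))"
    by (metis choice)
  define d' where "d' i s = ast s i" for i s
  have d'det: "det_joint A d'"
    using ast unfolding d'_def det_joint_def det_policy_def jacts_def by (auto simp: PiE_iff)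
  have d's: "(\<lambda>i. d' i s) = ast s" for s unfolding d'_def by auto
  have Gpos: "0 \<le> G s (ast s)" for s
  proof -
    have "G s (\<lambda>i. dst i s) \<le> G s (ast s)" using ast dets_jacts[OF dst, of s] by blast
    then show ?thesis using Gd[of s] by simp
  qed
  let ?pi' = "stat A P (djoint d')"
  have "E (djoint d') G = E (djoint d') w - c"
    unfolding G_def by (rule pdl[OF detjoint_pol[OF d'det]])
  moreover have "E (djoint d') w \<le> c" using best d'det unfolding c_def by blast
  ultimately have "E (djoint d') G \<le> 0" by simp
  then have "(\<Sum>s\<in>UNIV. ?pi' s * G s (ast s)) \<le> 0"
    unfolding E_det[OF d'det] d's .
  moreover have "\<forall>s\<in>UNIV. 0 \<le> ?pi' s * G s (ast s)"
    using Gpos stat_pos'[OF detjoint_pol[OF d'det]] by (simp add: less_imp_le)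
  ultimately have "(\<Sum>s\<in>UNIV. ?pi' s * G s (ast s)) = 0"
    by (meson antisym sum_nonneg)
  then have "\<forall>s. ?pi' s * G s (ast s) = 0"
    using sum_nonneg_eq_0_iff[of UNIV "\<lambda>s. ?pi' s * G s (ast s)"] \<open>\<forall>s\<in>UNIV. 0 \<le> ?pi' s * G s (ast s)\<close> by simp
  then have "G s (ast s) = 0" for s
  proof -
    assume h: "\<forall>s. ?pi' s * G s (ast s) = 0"
    have "?pi' s \<noteq> 0" using stat_pos'[OF detjoint_pol[OF d'det], of s] by linarith
    then show ?thesis using h[rule_format, of s] by simp
  qed
  then have Gle: "\<forall>s. \<forall>a\<in>jacts A. G s a \<le> 0" using ast by metis
  have "E mu G = E mu w - c" unfolding G_def by (rule pdl[OF mu])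
  moreover have "E mu G \<le> 0"
    unfolding E_def
  proof (intro sum_nonpos)
    fix s
    have "(\<Sum>a\<in>jacts A. jp mu s a * G s a) \<le> 0"
      using Gle jp_nonneg[OF mu] by (intro sum_nonpos) (simp add: mult_nonneg_nonpos)
    then show "stat A P mu s * (\<Sum>a\<in>jacts A. jp mu s a * G s a) \<le> 0"
      using stat_pos'[OF mu, of s] by (simp add: mult_nonneg_nonpos)
  qed
  ultimately show ?thesis unfolding c_def by simp
qed

lemma opt_det: "\<exists>dm. det_joint A dm \<and> (\<forall>mu\<in>policies A. Jmv A P r \<beta> mu \<le> Jmv A P r \<beta> (djoint dm))"
proof -
  have ne: "{d :: 'i \<Rightarrow> 's \<Rightarrow> 'a. det_joint A d} \<noteq> {}" using nonempty_D by blast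
  obtain dm where dm: "det_joint A dm" "\<forall>d\<in>{d. det_joint A d}. Jmv A P r \<beta> (djoint d) \<le> Jmv A P r \<beta> (djoint dm)"
    using fin_argmax[OF finite_D ne, of "\<lambda>d. Jmv A P r \<beta> (djoint d)"] by blast
  have "Jmv A P r \<beta> mu \<le> Jmv A P r \<beta> (djoint dm)" if mu: "mu \<in> policies A" for mu
  proof -
    let ?w = "fsa A P r \<beta> mu"
    obtain dst where dst: "det_joint A dst" "\<forall>d\<in>{d. det_joint A d}. E (djoint d) ?w \<le> E (djoint dst) ?w"
      using fin_argmax[OF finite_D ne, of "\<lambda>d. E (djoint d) ?w"] by blast
    have "Jmv A P r \<beta> mu = E mu ?w" unfolding E_fsa[OF mu] by simp
    also have "\<dots> \<le> E (djoint dst) ?w" using improve[OF dst(1) _ mu] dst(2) by blast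
    also have "\<dots> \<le> Jmv A P r \<beta> (djoint dst)"
      unfolding E_fsa[OF detjoint_pol[OF dst(1)]] using beta by simp
    also have "\<dots> \<le> Jmv A P r \<beta> (djoint dm)" using dm(2) dst(1) by blast
    finally show ?thesis .
  qed
  then show ?thesis using dm(1) by blast
qed

end

context mvg begin

lemma E_mix:
  assumes d: "det_joint A d" and e: "det_policy A i e"
  shows "E (mix d i e \<delta>) X = (\<Sum>s\<in>UNIV. stat A P (mix d i e \<delta>) s *
            ((1 - \<delta>) * X s (\<lambda>j. d j s) + \<delta> * X s ((\<lambda>j. d j s)(i := e s))))"
  unfolding E_def G_mix[OF d e] ..

lemma Af_dt0:
  assumes d: "det_joint A d"
  shows "Af A P r \<beta> (djoint d) s (\<lambda>j. d j s) = 0"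
  using Af_avg0[OF detjoint_pol[OF d], of s] unfolding G_det[OF d] .

lemma part2:
  assumes dt: "det_joint A dt"
    and fx: "\<forall>i s. dt i s \<in> argmaxA A P r \<beta> (djoint dt) i s"
  shows "\<exists>\<delta>b. 0 < \<delta>b \<and> \<delta>b \<le> 1 \<and>
            (\<forall>\<delta>. 0 < \<delta> \<and> \<delta> \<le> \<delta>b \<longrightarrow>
              (\<forall>i e. det_policy A i e \<and> e \<noteq> dt i \<and> dt(i := e) \<in> Dtilde A P r \<beta> dt \<longrightarrow>
                 Jmv A P r \<beta> (mix dt i e \<delta>) < Jmv A P r \<beta> (djoint dt)))"
proof -
  let ?M0 = "djoint dt"
  have M0: "?M0 \<in> policies A" by (rule detjoint_pol[OF dt])
  let ?K = "chain A P ?M0"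
  obtain n0 where n0: "\<forall>s s'. 0 < mpow ?K n0 s s'"
    using chain_erg[OF M0] unfolding ergodic_def by blast
  define m0 where "m0 = Min ((\<lambda>p. mpow ?K n0 (fst p) (snd p)) ` UNIV)"
  have m0le: "m0 \<le> mpow ?K n0 s s'" for s s'
    unfolding m0_def by (rule Min_le) (auto intro: image_eqI[where x="(s, s')"])
  have m0pos: "0 < m0"
  proof -
    have "m0 \<in> (\<lambda>p. mpow ?K n0 (fst p) (snd p)) ` UNIV" unfolding m0_def by (rule Min_in) auto
    then show ?thesis using n0 by auto
  qed
  define \<kappa> where "\<kappa> = (1/2) ^ n0 * m0"
  have kpos: "0 < \<kappa>" unfolding \<kappa>_def using m0pos by simp
  let ?pi0 = "stat A P ?M0"
  define eta0 where "eta0 = eta A P r ?M0"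
  have "(\<Sum>s\<in>UNIV. ?pi0 s * ((\<Sum>a\<in>jacts A. jp ?M0 s a * r s a) - eta0)) =
        E ?M0 r - eta0 * (\<Sum>s\<in>UNIV. ?pi0 s)"
    unfolding E_def by (simp add: right_diff_distrib sum_subtractf sum_distrib_left mult.commute)
  also have "\<dots> = 0" unfolding stat_sum'[OF M0] eta0_def eta_E by simp
  finally have "\<exists>V. \<forall>s. V s = ((\<Sum>a\<in>jacts A. jp ?M0 s a * r s a) - eta0) + (\<Sum>t\<in>UNIV. ?K s t * V t)"
    by (rule poisson[OF chain_stoch[OF M0] chain_erg[OF M0] stat_stationary[OF M0]])
  then obtain Vr where Vr: "\<forall>s. Vr s = ((\<Sum>a\<in>jacts A. jp ?M0 s a * r s a) - eta0) + (\<Sum>t\<in>UNIV. ?K s t * Vr t)"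
    by blast
  define Ar where "Ar s a = r s a - eta0 + (\<Sum>t\<in>UNIV. P s a t * Vr t) - Vr s" for s a
  have Ar0: "Ar s (\<lambda>j. dt j s) = 0" for s
  proof -
    have "(\<Sum>a\<in>jacts A. jp ?M0 s a * Ar s a) = 0"
      unfolding Ar_def inner_pdl[OF M0] using Vr by (metis diff_self)
    then show ?thesis unfolding G_det[OF dt] .
  qed
  define C0 where "C0 = (\<Sum>s\<in>UNIV. \<Sum>a\<in>jacts A. \<bar>Ar s a\<bar>)"
  define Gs where "Gs = {(i, s, b). b \<in> A i \<and> b \<notin> argmaxA A P r \<beta> ?M0 i s}"
  define Gap where "Gap = (\<lambda>(i, s, b). expA A P r \<beta> ?M0 i s (dt i s) - expA A P r \<beta> ?M0 i s b) ` Gs"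
  have finGs: "finite Gs"
  proof (rule finite_subset)
    show "Gs \<subseteq> (UNIV::'i set) \<times> (UNIV::'s set) \<times> (\<Union>i. A i)" unfolding Gs_def by auto
    show "finite ((UNIV::'i set) \<times> (UNIV::'s set) \<times> (\<Union>i. A i))"
      by (intro finite_cartesian_product finite_UN_I) (auto simp: fin_A)
  qed
  define \<gamma> where "\<gamma> = Min (insert 1 Gap)"
  have finGap: "finite (insert 1 Gap)" unfolding Gap_def using finGs by simp
  have Gap_pos: "\<forall>x\<in>insert 1 Gap. 0 < x"
  proof
    fix x assume "x \<in> insert 1 Gap"
    then show "0 < x"
    proof
      assume "x = 1" then show ?thesis by simp
    next
      assume "x \<in> Gap"
      then obtain i s b where b: "b \<in> A i" "b \<notin> argmaxA A P r \<beta> ?M0 i s"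
        and x: "x = expA A P r \<beta> ?M0 i s (dt i s) - expA A P r \<beta> ?M0 i s b"
        unfolding Gap_def Gs_def by auto
      obtain b' where b': "b' \<in> A i" "expA A P r \<beta> ?M0 i s b < expA A P r \<beta> ?M0 i s b'"
        using b unfolding argmaxA_def by (auto simp: not_le)
      have "expA A P r \<beta> ?M0 i s b' \<le> expA A P r \<beta> ?M0 i s (dt i s)"
        using fx b'(1) unfolding argmaxA_def by blast
      then show ?thesis using x b'(2) by simp
    qed
  qed
  have gpos: "0 < \<gamma>" unfolding \<gamma>_def using Min_in[OF finGap] Gap_pos by blast
  have gle: "\<gamma> \<le> x" if "x \<in> Gap" for x unfolding \<gamma>_def using finGap that by (intro Min_le) auto
  define X where "X = \<beta> * C0\<^sup>2"
  have X0: "0 \<le> X" unfolding X_def using beta by simp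
  define \<delta>b where "\<delta>b = min (1/2) (\<kappa> * \<gamma> / (X + 1))"
  have db0: "0 < \<delta>b" unfolding \<delta>b_def using kpos gpos X0 by simp
  have db1: "\<delta>b \<le> 1" unfolding \<delta>b_def by simp
  have main: "Jmv A P r \<beta> (mix dt i e \<delta>) < Jmv A P r \<beta> ?M0"
    if dl: "0 < \<delta>" "\<delta> \<le> \<delta>b" and e: "det_policy A i e" "e \<noteq> dt i" "dt(i := e) \<in> Dtilde A P r \<beta> dt"
    for \<delta> i e
  proof -
    let ?mu = "mix dt i e \<delta>"
    have dhalf: "\<delta> \<le> 1/2" using dl unfolding \<delta>b_def by simp
    have mu: "?mu \<in> policies A" using mix_pol[OF dt e(1)] dl dhalf by simp
    let ?pi = "stat A P ?mu"
    have pi_nn: "0 \<le> ?pi s" for s using stat_pos'[OF mu, of s] by simp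
    have pi_le1: "?pi s \<le> 1" for s
    proof -
      have "?pi s \<le> (\<Sum>s\<in>UNIV. ?pi s)" by (rule member_le_sum) (auto simp: pi_nn)
      then show ?thesis using stat_sum'[OF mu] by simp
    qed
    have eDset: "e \<notin> Dset A P r \<beta> dt i"
    proof
      assume "e \<in> Dset A P r \<beta> dt i"
      then have "dt(i := e) \<in> Dmu A P r \<beta> dt" unfolding Dmu_def by blast
      then show False using e(3) unfolding Dtilde_def by blast
    qed
    then obtain s0 where s0: "e s0 \<notin> argmaxA A P r \<beta> ?M0 i s0"
      using e(1,2) unfolding Dset_def by blast
    have es: "e s \<in> A i" for s using e(1) by (simp add: det_policy_def)
    define g where "g s = Af A P r \<beta> ?M0 s ((\<lambda>j. dt j s)(i := e s))" for s
    have g_eq: "g s = expA A P r \<beta> ?M0 i s (e s)" for s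
      unfolding g_def using expA_det[OF dt es] by simp
    have g_le: "g s \<le> 0" for s
    proof -
      have "expA A P r \<beta> ?M0 i s (e s) \<le> expA A P r \<beta> ?M0 i s (dt i s)"
        using fx es unfolding argmaxA_def by blast
      then show ?thesis using g_eq expA_dt0[OF dt] by simp
    qed
    have g_s0: "g s0 \<le> - \<gamma>"
    proof -
      have "(i, s0, e s0) \<in> Gs" unfolding Gs_def using es s0 by simp
      then have "expA A P r \<beta> ?M0 i s0 (dt i s0) - expA A P r \<beta> ?M0 i s0 (e s0) \<in> Gap"
        unfolding Gap_def by force
      then have "\<gamma> \<le> expA A P r \<beta> ?M0 i s0 (dt i s0) - expA A P r \<beta> ?M0 i s0 (e s0)" by (rule gle)
      then show ?thesis using g_eq expA_dt0[OF dt] by simp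
    qed
    have Kmu_ge: "\<forall>s t. (1 - \<delta>) * ?K s t \<le> chain A P ?mu s t"
      using chain_mix_ge[OF dt e(1)] dl by simp
    have pis0: "\<kappa> \<le> ?pi s0"
    proof -
      have mono: "(1 - \<delta>) ^ n0 * mpow ?K n0 s s0 \<le> mpow (chain A P ?mu) n0 s s0" for s
        by (rule mpow_mono) (use Kmu_ge chain_nonneg[OF M0] dhalf in auto)
      have c1: "(1/2) ^ n0 \<le> (1 - \<delta>) ^ n0" using dhalf by (intro power_mono) auto
      have "\<kappa> \<le> (1 - \<delta>) ^ n0 * m0" unfolding \<kappa>_def using c1 m0pos by (simp add: mult_right_mono)
      also have "\<dots> = (\<Sum>s\<in>UNIV. ?pi s * ((1 - \<delta>) ^ n0 * m0))"
        unfolding sum_distrib_right[symmetric] stat_sum'[OF mu] by simp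
      also have "\<dots> \<le> (\<Sum>s\<in>UNIV. ?pi s * mpow (chain A P ?mu) n0 s s0)"
      proof (rule sum_mono)
        fix s
        have "(1 - \<delta>) ^ n0 * m0 \<le> (1 - \<delta>) ^ n0 * mpow ?K n0 s s0"
          using m0le dhalf by (intro mult_left_mono) auto
        also have "\<dots> \<le> mpow (chain A P ?mu) n0 s s0" by (rule mono)
        finally show "?pi s * ((1 - \<delta>) ^ n0 * m0) \<le> ?pi s * mpow (chain A P ?mu) n0 s s0"
          using pi_nn by (intro mult_left_mono) auto
      qed
      also have "\<dots> = ?pi s0" by (rule stationary_mpow[OF stat_stationary[OF mu], symmetric])
      finally show ?thesis .
    qed
    \<comment> \<open>first-order term\<close>
    have T1: "E ?mu (Af A P r \<beta> ?M0) = \<delta> * (\<Sum>s\<in>UNIV. ?pi s * g s)"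
    proof -
      have "E ?mu (Af A P r \<beta> ?M0) = (\<Sum>s\<in>UNIV. \<delta> * (?pi s * g s))"
        unfolding E_mix[OF dt e(1)] Af_dt0[OF dt] g_def[symmetric] by (intro sum.cong refl) simp
      then show ?thesis by (simp only: sum_distrib_left[symmetric])
    qed
    have sumg: "(\<Sum>s\<in>UNIV. ?pi s * g s) \<le> - (\<kappa> * \<gamma>)"
    proof -
      have a: "(\<Sum>s\<in>UNIV. ?pi s * g s) = ?pi s0 * g s0 + (\<Sum>s\<in>UNIV - {s0}. ?pi s * g s)"
        by (rule sum.remove) auto
      have b: "(\<Sum>s\<in>UNIV - {s0}. ?pi s * g s) \<le> 0"
        using pi_nn g_le by (intro sum_nonpos) (simp add: mult_nonneg_nonpos)
      have c: "?pi s0 * g s0 \<le> ?pi s0 * (- \<gamma>)" using g_s0 pi_nn by (intro mult_left_mono) auto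
      have d: "?pi s0 * (- \<gamma>) \<le> \<kappa> * (- \<gamma>)" using pis0 gpos by (intro mult_right_mono_neg) auto
      show ?thesis using a b c d by simp
    qed
    \<comment> \<open>second-order term\<close>
    define h where "h s = Ar s ((\<lambda>j. dt j s)(i := e s))" for s
    have Ea: "E ?mu Ar = E ?mu r - eta0" unfolding Ar_def by (rule pdl[OF mu])
    have Eb: "E ?mu Ar = \<delta> * (\<Sum>s\<in>UNIV. ?pi s * h s)"
    proof -
      have "E ?mu Ar = (\<Sum>s\<in>UNIV. \<delta> * (?pi s * h s))"
        unfolding E_mix[OF dt e(1)] Ar0 h_def[symmetric] by (intro sum.cong refl) simp
      then show ?thesis by (simp only: sum_distrib_left[symmetric])
    qed
    have etad: "eta A P r ?mu - eta A P r ?M0 = \<delta> * (\<Sum>s\<in>UNIV. ?pi s * h s)"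
      using Ea Eb eta_E[of ?mu] eta0_def by simp
    have hb: "\<bar>\<Sum>s\<in>UNIV. ?pi s * h s\<bar> \<le> C0"
    proof -
      have "\<bar>\<Sum>s\<in>UNIV. ?pi s * h s\<bar> \<le> (\<Sum>s\<in>UNIV. \<bar>?pi s * h s\<bar>)" by (rule sum_abs)
      also have "\<dots> \<le> (\<Sum>s\<in>UNIV. \<Sum>a\<in>jacts A. \<bar>Ar s a\<bar>)"
      proof (rule sum_mono)
        fix s
        have mem: "(\<lambda>j. dt j s)(i := e s) \<in> jacts A"
          using dt es unfolding det_joint_def det_policy_def jacts_def by (auto simp: PiE_iff)
        have "\<bar>?pi s * h s\<bar> \<le> \<bar>h s\<bar>"
          using pi_nn pi_le1 by (simp add: abs_mult mult_left_le_one_le)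
        also have "\<dots> \<le> (\<Sum>a\<in>jacts A. \<bar>Ar s a\<bar>)"
          unfolding h_def by (rule member_le_sum[OF mem]) (auto simp: fin_jacts)
        finally show "\<bar>?pi s * h s\<bar> \<le> (\<Sum>a\<in>jacts A. \<bar>Ar s a\<bar>)" .
      qed
      finally show ?thesis unfolding C0_def .
    qed
    have sq: "(eta A P r ?mu - eta A P r ?M0)\<^sup>2 \<le> \<delta>\<^sup>2 * C0\<^sup>2"
    proof -
      have "(eta A P r ?mu - eta A P r ?M0)\<^sup>2 = \<delta>\<^sup>2 * (\<Sum>s\<in>UNIV. ?pi s * h s)\<^sup>2"
        unfolding etad by (simp add: power_mult_distrib)
      also have "(\<Sum>s\<in>UNIV. ?pi s * h s)\<^sup>2 \<le> C0\<^sup>2"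
        using power_mono[OF hb abs_ge_zero, of 2] by simp
      then have "\<delta>\<^sup>2 * (\<Sum>s\<in>UNIV. ?pi s * h s)\<^sup>2 \<le> \<delta>\<^sup>2 * C0\<^sup>2" by (intro mult_left_mono) auto
      finally show ?thesis .
    qed
    have JD: "Jmv A P r \<beta> ?mu - Jmv A P r \<beta> ?M0 \<le> - \<delta> * (\<kappa> * \<gamma>) + \<delta>\<^sup>2 * X"
    proof -
      have "Jmv A P r \<beta> ?mu - Jmv A P r \<beta> ?M0 =
            \<delta> * (\<Sum>s\<in>UNIV. ?pi s * g s) + \<beta> * (eta A P r ?mu - eta A P r ?M0)\<^sup>2"
        using J_diff[OF mu, of ?M0] T1 by simp
      also have "\<delta> * (\<Sum>s\<in>UNIV. ?pi s * g s) \<le> \<delta> * (- (\<kappa> * \<gamma>))"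
        using sumg dl by (intro mult_left_mono) auto
      also have "\<beta> * (eta A P r ?mu - eta A P r ?M0)\<^sup>2 \<le> \<beta> * (\<delta>\<^sup>2 * C0\<^sup>2)"
        using sq beta by (intro mult_left_mono) auto
      also have "\<beta> * (\<delta>\<^sup>2 * C0\<^sup>2) = \<delta>\<^sup>2 * X" unfolding X_def by (rule mult.left_commute)
      finally show ?thesis by simp
    qed
    have "\<delta> * (X + 1) \<le> \<kappa> * \<gamma>"
    proof -
      have "\<delta> \<le> \<kappa> * \<gamma> / (X + 1)" using dl unfolding \<delta>b_def by simp
      then show ?thesis using X0 by (simp add: field_simps)
    qed
    moreover have "\<delta> * (X + 1) = \<delta> * X + \<delta>" by (simp add: distrib_left)
    ultimately have "\<delta> * X < \<kappa> * \<gamma>" using dl by linarith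
    then have "\<delta> * (\<delta> * X) < \<delta> * (\<kappa> * \<gamma>)" using dl by simp
    moreover have "\<delta>\<^sup>2 * X = \<delta> * (\<delta> * X)" by (simp add: power2_eq_square)
    ultimately have "- \<delta> * (\<kappa> * \<gamma>) + \<delta>\<^sup>2 * X < 0" by linarith
    then show ?thesis using JD by simp
  qed
  show ?thesis using db0 db1 main by blast
qed

end

theorem theorem4:
  fixes A :: "'i::{finite,linorder} \<Rightarrow> 'a set"
    and P :: "'s::finite \<Rightarrow> ('i \<Rightarrow> 'a) \<Rightarrow> 's \<Rightarrow> real"
    and r :: "'s \<Rightarrow> ('i \<Rightarrow> 'a) \<Rightarrow> real"
    and \<beta> :: real
    and d0 dt :: "'i \<Rightarrow> 's \<Rightarrow> 'a"
  assumes acts: "\<forall>i. finite (A i) \<and> A i \<noteq> {}"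
    and P_nonneg: "\<forall>s a s'. a \<in> jacts A \<longrightarrow> 0 \<le> P s a s'"
    and P_sum: "\<forall>s a. a \<in> jacts A \<longrightarrow> (\<Sum>s'\<in>UNIV. P s a s') = 1"
    and erg: "\<forall>mu\<in>policies A. ergodic (chain A P mu)"
    and beta: "0 \<le> \<beta>"
    and init: "det_joint A d0"
    and out: "modified A P r \<beta> d0 dt"
  shows "(\<forall>d\<in>Dmu A P r \<beta> dt. Jmv A P r \<beta> (djoint dt) = Jmv A P r \<beta> (djoint d))
       \<and> (\<exists>dstar\<in>Dtilde A P r \<beta> dt. \<forall>mu\<in>policies A.
              Jmv A P r \<beta> mu \<le> Jmv A P r \<beta> (djoint dstar))
       \<and> (\<exists>\<delta>b. 0 < \<delta>b \<and> \<delta>b \<le> 1 \<and>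
            (\<forall>\<delta>. 0 < \<delta> \<and> \<delta> \<le> \<delta>b \<longrightarrow>
              (\<forall>i e. det_policy A i e \<and> e \<noteq> dt i \<and> dt(i := e) \<in> Dtilde A P r \<beta> dt \<longrightarrow>
                 Jmv A P r \<beta> ((djoint dt)(i := (\<lambda>s b. (1 - \<delta>) * detp (dt i) s b + \<delta> * detp e s b)))
                   < Jmv A P r \<beta> (djoint dt))))"
proof -
  interpret g: mvg A P r \<beta> by (rule mvg.intro[OF acts P_nonneg P_sum erg beta])
  have props: "det_joint A dt \<and> (\<forall>i s. dt i s \<in> argmaxA A P r \<beta> (djoint dt) i s) \<and>
    (\<forall>i. \<forall>e\<in>Dset A P r \<beta> dt i. eta A P r (djoint (dt(i := e))) = eta A P r (djoint dt))"
    by (rule modified_props[OF out init])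
  then have dt: "det_joint A dt" and fx: "\<forall>i s. dt i s \<in> argmaxA A P r \<beta> (djoint dt) i s"
    and etaeq: "\<forall>i. \<forall>e\<in>Dset A P r \<beta> dt i. eta A P r (djoint (dt(i := e))) = eta A P r (djoint dt)"
    by blast+
  have P1: "\<forall>d\<in>Dmu A P r \<beta> dt. Jmv A P r \<beta> (djoint dt) = Jmv A P r \<beta> (djoint d)"
    using g.part1a[OF dt fx etaeq] by blast
  have dtD: "dt \<in> Dtilde A P r \<beta> dt"
  proof -
    have "dt \<notin> Dmu A P r \<beta> dt"
    proof
      assume "dt \<in> Dmu A P r \<beta> dt"
      then obtain i e where de: "dt = dt(i := e)" and e: "e \<in> Dset A P r \<beta> dt i"
        unfolding Dmu_def by blast
      have "e = dt i" using de by (metis fun_upd_same)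
      then show False using e unfolding Dset_def by blast
    qed
    then show ?thesis using dt unfolding Dtilde_def by blast
  qed
  obtain dm where dm: "det_joint A dm" "\<forall>mu\<in>policies A. Jmv A P r \<beta> mu \<le> Jmv A P r \<beta> (djoint dm)"
    using g.opt_det by blast
  have P2: "\<exists>dstar\<in>Dtilde A P r \<beta> dt. \<forall>mu\<in>policies A. Jmv A P r \<beta> mu \<le> Jmv A P r \<beta> (djoint dstar)"
  proof (cases "dm \<in> Dmu A P r \<beta> dt")
    case True
    then have "Jmv A P r \<beta> (djoint dt) = Jmv A P r \<beta> (djoint dm)" using P1 by blast
    then have "\<forall>mu\<in>policies A. Jmv A P r \<beta> mu \<le> Jmv A P r \<beta> (djoint dt)" using dm(2) by simp
    then show ?thesis using dtD by blast
  next
    case False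
    then have "dm \<in> Dtilde A P r \<beta> dt" using dm(1) unfolding Dtilde_def by blast
    then show ?thesis using dm(2) by blast
  qed
  have P3: "\<exists>\<delta>b. 0 < \<delta>b \<and> \<delta>b \<le> 1 \<and>
            (\<forall>\<delta>. 0 < \<delta> \<and> \<delta> \<le> \<delta>b \<longrightarrow>
              (\<forall>i e. det_policy A i e \<and> e \<noteq> dt i \<and> dt(i := e) \<in> Dtilde A P r \<beta> dt \<longrightarrow>
                 Jmv A P r \<beta> ((djoint dt)(i := (\<lambda>s b. (1 - \<delta>) * detp (dt i) s b + \<delta> * detp e s b)))
                   < Jmv A P r \<beta> (djoint dt)))"
    using g.part2[OF dt fx] unfolding g.mix_def .
  show ?thesis using P1 P2 P3 by blast
qed

end
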